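(* Let $n\in\mathbb{N}$, $\sigma>0$, let $f:\mathbb{R}\to\mathbb{R}$ be smooth and odd, and let $F:\mathbb{R}\times X\to Y$, $F(\lambda,u)=-\Delta(\Delta u+\lambda f(u))-\lambda\sigma u$, so that $D_{uu}F(\lambda,u)[v,w]=-\Delta(\lambda f''(u)vw)$. Then for all $\lambda\in\mathbb{R}$ and $u\in X_a$: (i) $D_{uu}F(\lambda,u)[X_a,X_a]\subset Y_a$; (ii) $D_{uu}F(\lambda,u)[X_a\oplus X_b,X_a\oplus X_b]\subset Y_a\oplus Y_b$; (iii) $D_{uu}F(\lambda,u)[X_a,X_b]\subset Y_b$; (iv) $D_{uu}F(\lambda,u)[X_c,X_c]\subset Y_a\oplus Y_b$; (v) $D_{uu}F(\lambda,u)[X_a\oplus X_b,X_c]\subset Y_c$. (By symmetry of $D_{uu}F$ the order of the arguments in (iii) and (v) is irrelevant.)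
   Context: Let $\Omega=(0,1)$, $\Delta=d^2/dx^2$. $X=\{u\in H^2(\Omega): u'(0)=u'(1)=0,\ \int_\Omega u\,dx=0\}$; $Y=H^{-2}(\Omega)$ with norm $\|\Delta^{-1}u\|_{L^2}$, where $\Delta$ maps mean-zero $L^2(\Omega)$ isometrically onto $H^{-2}(\Omega)$. Let $H^2_{per}(\mathbb{R})$, $L^2_{per}(\mathbb{R})$ be the spaces of $2$-periodic functions in $H^2_{loc}$, resp. $L^2_{loc}$, with $\int_0^2v\,dx=0$. The extension of $w\in L^2(\Omega)$ is the $2$-periodic function equal to $w(x)$ on $[0,1]$ and $w(2-x)$ on $(1,2)$. For $W=H^2_{per}$ or $L^2_{per}$ let $(T_nv)(x)=-v(x+1/n)$, $W_a=N(T_n-I)$, $W_b=N(T_n^{n-1}+\dots+T_n+I)$, $W_c=N(T_n^n+I)$. For $\tau\in\{a,b,c\}$: $X_\tau=\{u\in X:\text{extension of }u\in W_\tau\subset H^2_{per}\}$, $Y_\tau=\{y\in Y:\text{extension of }\Delta^{-1}y\in W_\tau\subset L^2_{per}\}$. *)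

theory Defs
  imports "HOL-Analysis.Analysis"
begin

definition smooth_fun :: "(real \<Rightarrow> real) \<Rightarrow> bool" where
  "smooth_fun f \<longleftrightarrow> (\<forall>k x. ((deriv ^^ k) f) differentiable (at x))"

definition L2_on :: "real \<Rightarrow> real \<Rightarrow> (real \<Rightarrow> real) \<Rightarrow> bool" where
  "L2_on a b u \<longleftrightarrow> u \<in> borel_measurable (lebesgue_on {a..b}) \<and>
      integrable (lebesgue_on {a..b}) (\<lambda>x. (u x)\<^sup>2)"

definition test_fun :: "real \<Rightarrow> real \<Rightarrow> (real \<Rightarrow> real) \<Rightarrow> bool" where
  "test_fun a b \<phi> \<longleftrightarrow> smooth_fun \<phi> \<and>
      (\<exists>c d. a < c \<and> d < b \<and> (\<forall>x. x \<notin> {c..d} \<longrightarrow> \<phi> x = 0))"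

definition weak_deriv_on :: "real \<Rightarrow> real \<Rightarrow> (real \<Rightarrow> real) \<Rightarrow> (real \<Rightarrow> real) \<Rightarrow> bool" where
  "weak_deriv_on a b u g \<longleftrightarrow> (\<forall>\<phi>. test_fun a b \<phi> \<longrightarrow>
      integral {a..b} (\<lambda>x. u x * deriv \<phi> x) = - integral {a..b} (\<lambda>x. g x * \<phi> x))"

definition H2_on :: "real \<Rightarrow> real \<Rightarrow> (real \<Rightarrow> real) \<Rightarrow> bool" where
  "H2_on a b u \<longleftrightarrow> L2_on a b u \<and> (\<exists>g1 g2. L2_on a b g1 \<and> L2_on a b g2 \<and>
      weak_deriv_on a b u g1 \<and> weak_deriv_on a b g1 g2)"

(* X = {u in H^2(0,1) : u'(0) = u'(1) = 0, int u = 0}; the boundary values refer to the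
   continuous representative of the weak derivative u' *)
definition X_space :: "(real \<Rightarrow> real) \<Rightarrow> bool" where
  "X_space u \<longleftrightarrow> L2_on 0 1 u \<and>
     (\<exists>g1 g2. L2_on 0 1 g1 \<and> L2_on 0 1 g2 \<and> weak_deriv_on 0 1 u g1 \<and> weak_deriv_on 0 1 g1 g2
        \<and> continuous_on {0..1} g1 \<and> g1 0 = 0 \<and> g1 1 = 0) \<and>
     integral {0..1} u = 0"

definition H2_per :: "(real \<Rightarrow> real) \<Rightarrow> bool" where
  "H2_per v \<longleftrightarrow> (\<forall>x. v (x + 2) = v x) \<and> (\<forall>a b. a < b \<longrightarrow> H2_on a b v) \<and>
      integral {0..2} v = 0"

definition L2_per :: "(real \<Rightarrow> real) \<Rightarrow> bool" where
  "L2_per v \<longleftrightarrow> (\<forall>x. v (x + 2) = v x) \<and> (\<forall>a b. a < b \<longrightarrow> L2_on a b v) \<and>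
      integral {0..2} v = 0"

definition ext :: "(real \<Rightarrow> real) \<Rightarrow> real \<Rightarrow> real" where
  "ext w x = (let t = x - 2 * of_int \<lfloor>x / 2\<rfloor> in if t \<le> 1 then w t else w (2 - t))"

definition opT :: "nat \<Rightarrow> (real \<Rightarrow> real) \<Rightarrow> real \<Rightarrow> real" where
  "opT n v = (\<lambda>x. - v (x + 1 / real n))"

datatype subsp = Sa | Sb | Sc

(* the kernel conditions W_a = N(T_n - I), W_b = N(T_n^(n-1)+...+I), W_c = N(T_n^n + I),
   equality being equality of L^2_loc classes (a.e.) *)
definition ker_cond :: "nat \<Rightarrow> subsp \<Rightarrow> (real \<Rightarrow> real) \<Rightarrow> bool" where
  "ker_cond n \<tau> v = (case \<tau> of
      Sa \<Rightarrow> (AE x in lborel. opT n v x - v x = 0)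
    | Sb \<Rightarrow> (AE x in lborel. (\<Sum>k<n. (opT n ^^ k) v x) = 0)
    | Sc \<Rightarrow> (AE x in lborel. (opT n ^^ n) v x + v x = 0))"

definition Xsub :: "nat \<Rightarrow> subsp \<Rightarrow> (real \<Rightarrow> real) \<Rightarrow> bool" where
  "Xsub n \<tau> u \<longleftrightarrow> X_space u \<and> H2_per (ext u) \<and> ker_cond n \<tau> (ext u)"

(* Elements of Y = H^{-2} are represented as functionals on the Neumann test functions
   (smooth, phi'(0) = phi'(1) = 0); Delta h acts by phi |-> int_0^1 h phi''. *)
definition neumann_test :: "(real \<Rightarrow> real) \<Rightarrow> bool" where
  "neumann_test \<phi> \<longleftrightarrow> smooth_fun \<phi> \<and> deriv \<phi> 0 = 0 \<and> deriv \<phi> 1 = 0"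

definition lapD :: "(real \<Rightarrow> real) \<Rightarrow> (real \<Rightarrow> real) \<Rightarrow> real" where
  "lapD h = (\<lambda>\<phi>. integral {0..1} (\<lambda>x. h x * deriv (deriv \<phi>) x))"

(* y in Y_tau: y = Delta h with h mean-zero L^2 (i.e. h = Delta^{-1} y) and ext h in W_tau *)
definition Ysub :: "nat \<Rightarrow> subsp \<Rightarrow> ((real \<Rightarrow> real) \<Rightarrow> real) \<Rightarrow> bool" where
  "Ysub n \<tau> y \<longleftrightarrow> (\<exists>h. L2_on 0 1 h \<and> integral {0..1} h = 0 \<and>
      (\<forall>\<phi>. neumann_test \<phi> \<longrightarrow> y \<phi> = lapD h \<phi>) \<and>
      L2_per (ext h) \<and> ker_cond n \<tau> (ext h))"

definition dsumX :: "((real \<Rightarrow> real) \<Rightarrow> bool) \<Rightarrow> ((real \<Rightarrow> real) \<Rightarrow> bool) \<Rightarrow> (real \<Rightarrow> real) \<Rightarrow> bool" where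
  "dsumX P Q z \<longleftrightarrow> (\<exists>x y. P x \<and> Q y \<and> (AE t in lebesgue_on {0..1}. z t = x t + y t))"

definition dsumY :: "(((real \<Rightarrow> real) \<Rightarrow> real) \<Rightarrow> bool) \<Rightarrow> (((real \<Rightarrow> real) \<Rightarrow> real) \<Rightarrow> bool)
    \<Rightarrow> ((real \<Rightarrow> real) \<Rightarrow> real) \<Rightarrow> bool" where
  "dsumY P Q z \<longleftrightarrow> (\<exists>x y. P x \<and> Q y \<and> (\<forall>\<phi>. neumann_test \<phi> \<longrightarrow> z \<phi> = x \<phi> + y \<phi>))"

definition DuuF :: "(real \<Rightarrow> real) \<Rightarrow> real \<Rightarrow> (real \<Rightarrow> real) \<Rightarrow> (real \<Rightarrow> real) \<Rightarrow> (real \<Rightarrow> real)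
    \<Rightarrow> (real \<Rightarrow> real) \<Rightarrow> real" where
  "DuuF f lam u v w = (\<lambda>\<phi>. - lapD (\<lambda>x. lam * deriv (deriv f) (u x) * v x * w x) \<phi>)"

end

theory Submission
  imports Defs "HOL-Computational_Algebra.Polynomial"
begin


lemma sm_Suc: "smooth_fun f \<longleftrightarrow> (\<forall>x. f differentiable (at x)) \<and> smooth_fun (deriv f)"
proof
  assume s: "smooth_fun f"
  have "(\<forall>x. f differentiable (at x))" using s[unfolded smooth_fun_def, rule_format, of 0] by simp
  moreover have "smooth_fun (deriv f)" unfolding smooth_fun_def
  proof (intro allI)
    fix k x
    have "(deriv ^^ Suc k) f differentiable (at x)" using s unfolding smooth_fun_def by blast
    thus "(deriv ^^ k) (deriv f) differentiable (at x)" by (simp only: funpow_Suc_right o_apply)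
  qed
  ultimately show "(\<forall>x. f differentiable (at x)) \<and> smooth_fun (deriv f)" by blast
next
  assume a: "(\<forall>x. f differentiable (at x)) \<and> smooth_fun (deriv f)"
  show "smooth_fun f" unfolding smooth_fun_def
  proof (intro allI)
    fix k x show "(deriv ^^ k) f differentiable (at x)"
    proof (cases k)
      case 0 then show ?thesis using a by simp
    next
      case (Suc m)
      have "(deriv ^^ m) (deriv f) differentiable (at x)" using a unfolding smooth_fun_def by blast
      then show ?thesis using Suc by (simp only: funpow_Suc_right o_apply)
    qed
  qed
qed

lemma sm_diff: "smooth_fun f \<Longrightarrow> f differentiable (at x)"
  using sm_Suc by blast

lemma sm_deriv: "smooth_fun f \<Longrightarrow> smooth_fun (deriv f)"
  using sm_Suc by blast

lemma sm_has_deriv: "smooth_fun f \<Longrightarrow> (f has_real_derivative deriv f x) (at x)"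
  by (meson DERIV_deriv_iff_real_differentiable sm_diff)

lemma sm_isCont: "smooth_fun f \<Longrightarrow> isCont f x"
  by (simp add: differentiable_imp_continuous_within sm_diff)

lemma sm_cont_on: "smooth_fun f \<Longrightarrow> continuous_on S f"
  by (simp add: continuous_at_imp_continuous_on sm_isCont)

lemma sm_class:
  assumes cl: "\<And>g. g \<in> C \<Longrightarrow> (\<forall>x. g differentiable (at x)) \<and> deriv g \<in> C"
    and f: "f \<in> C"
  shows "smooth_fun f"
proof -
  have "\<forall>g\<in>C. (deriv ^^ k) g \<in> C" for k
  proof (induction k)
    case 0 then show ?case by simp
  next
    case (Suc k)
    then show ?case using cl by (simp only: funpow_Suc_right o_apply) blast
  qed
  then show ?thesis unfolding smooth_fun_def using cl f by blast
qed

lemma sm_by_deriv: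
  assumes "\<And>x. (f has_real_derivative g x) (at x)" and "smooth_fun g"
  shows "smooth_fun f"
proof -
  have "deriv f = g" using assms(1) DERIV_imp_deriv by blast
  then show ?thesis using assms sm_Suc real_differentiable_def by metis
qed

lemma sm_const: "smooth_fun (\<lambda>x. c)"
  by (rule sm_class[where C="{\<lambda>x. d | d. True}"]) auto

definition sp :: "((real \<Rightarrow> real) \<times> (real \<Rightarrow> real)) list \<Rightarrow> real \<Rightarrow> real" where
  "sp ps x = (\<Sum>pq\<leftarrow>ps. fst pq x * snd pq x)"

definition dsp :: "((real \<Rightarrow> real) \<times> (real \<Rightarrow> real)) list \<Rightarrow> ((real \<Rightarrow> real) \<times> (real \<Rightarrow> real)) list" where
  "dsp ps = concat (map (\<lambda>pq. [(deriv (fst pq), snd pq), (fst pq, deriv (snd pq))]) ps)"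

lemma sp_deriv:
  assumes "\<forall>pq\<in>set ps. smooth_fun (fst pq) \<and> smooth_fun (snd pq)"
  shows "(sp ps has_real_derivative sp (dsp ps) x) (at x)"
  using assms
proof (induction ps)
  case Nil then show ?case by (simp add: sp_def dsp_def)
next
  case (Cons pq ps)
  have h1: "((\<lambda>x. fst pq x * snd pq x) has_real_derivative
     (deriv (fst pq) x * snd pq x + fst pq x * deriv (snd pq) x)) (at x)"
    using DERIV_mult[OF sm_has_deriv[of "fst pq" x] sm_has_deriv[of "snd pq" x]] Cons.prems by (simp add: algebra_simps)
  have "sp (pq # ps) = (\<lambda>x. fst pq x * snd pq x + sp ps x)" by (simp add: sp_def fun_eq_iff)
  moreover have "sp (dsp (pq # ps)) x = (deriv (fst pq) x * snd pq x + fst pq x * deriv (snd pq) x) + sp (dsp ps) x"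
    by (simp add: sp_def dsp_def)
  ultimately show ?case using DERIV_add[OF h1 Cons.IH] Cons.prems by simp
qed

lemma sp_smooth:
  assumes "\<forall>pq\<in>set ps. smooth_fun (fst pq) \<and> smooth_fun (snd pq)"
  shows "smooth_fun (sp ps)"
proof (rule sm_class[where C="{sp qs | qs. \<forall>pq\<in>set qs. smooth_fun (fst pq) \<and> smooth_fun (snd pq)}"])
  fix g assume "g \<in> {sp qs | qs. \<forall>pq\<in>set qs. smooth_fun (fst pq) \<and> smooth_fun (snd pq)}"
  then obtain qs where g: "g = sp qs" and qs: "\<forall>pq\<in>set qs. smooth_fun (fst pq) \<and> smooth_fun (snd pq)" by blast
  have d: "\<And>x. (g has_real_derivative sp (dsp qs) x) (at x)" using sp_deriv[OF qs] g by simp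
  then have "deriv g = sp (dsp qs)" using DERIV_imp_deriv by blast
  moreover have "\<forall>pq\<in>set (dsp qs). smooth_fun (fst pq) \<and> smooth_fun (snd pq)"
    using qs by (auto simp: dsp_def sm_deriv)
  ultimately show "(\<forall>x. g differentiable (at x)) \<and> deriv g \<in> {sp qs | qs. \<forall>pq\<in>set qs. smooth_fun (fst pq) \<and> smooth_fun (snd pq)}"
    using d real_differentiable_def by blast
qed (use assms in blast)

lemma sm_mult: "smooth_fun f \<Longrightarrow> smooth_fun g \<Longrightarrow> smooth_fun (\<lambda>x. f x * g x)"
proof -
  assume "smooth_fun f" "smooth_fun g"
  then have "smooth_fun (sp [(f,g)])" by (intro sp_smooth) auto
  moreover have "sp [(f,g)] = (\<lambda>x. f x * g x)" by (simp add: sp_def fun_eq_iff)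
  ultimately show ?thesis by simp
qed

lemma sm_add: "smooth_fun f \<Longrightarrow> smooth_fun g \<Longrightarrow> smooth_fun (\<lambda>x. f x + g x)"
proof -
  assume "smooth_fun f" "smooth_fun g"
  then have "smooth_fun (sp [(f,\<lambda>x. 1),(g,\<lambda>x. 1)])" by (intro sp_smooth) (auto simp: sm_const)
  moreover have "sp [(f,\<lambda>x. 1),(g,\<lambda>x. 1)] = (\<lambda>x. f x + g x)" by (simp add: sp_def fun_eq_iff)
  ultimately show ?thesis by simp
qed

lemma sm_cmult: "smooth_fun f \<Longrightarrow> smooth_fun (\<lambda>x. c * f x)"
  using sm_mult[OF sm_const] by blast

lemma sm_diff_fun: "smooth_fun f \<Longrightarrow> smooth_fun g \<Longrightarrow> smooth_fun (\<lambda>x. f x - g x)"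
  using sm_add[of f "\<lambda>x. (-1) * g x"] sm_cmult[of g "-1"] by simp

lemma sm_affine:
  assumes f: "smooth_fun f"
  shows "smooth_fun (\<lambda>x. f (a * x + b))"
proof (rule sm_class[where C="{\<lambda>x. c * g (a * x + b) | c g. smooth_fun g}"])
  fix h assume "h \<in> {\<lambda>x. c * g (a * x + b) | c g. smooth_fun g}"
  then obtain c g where h: "h = (\<lambda>x. c * g (a * x + b))" and g: "smooth_fun g" by blast
  have d: "(h has_real_derivative (c * a) * deriv g (a * x + b)) (at x)" for x
  proof -
    have "((\<lambda>x. g (a * x + b)) has_real_derivative deriv g (a * x + b) * a) (at x)"
    proof (rule DERIV_chain2[OF sm_has_deriv[OF g]])
      show "((\<lambda>x. a * x + b) has_real_derivative a) (at x)" by (auto intro!: derivative_eq_intros)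
    qed
    then show ?thesis unfolding h by (auto intro!: derivative_eq_intros simp: algebra_simps)
  qed
  then have "deriv h = (\<lambda>x. (c * a) * deriv g (a * x + b))" using DERIV_imp_deriv by blast
  then show "(\<forall>x. h differentiable (at x)) \<and> deriv h \<in> {\<lambda>x. c * g (a * x + b) | c g. smooth_fun g}"
    using d g sm_deriv real_differentiable_def by blast
next
  show "(\<lambda>x. f (a * x + b)) \<in> {\<lambda>x. c * g (a * x + b) | c g. smooth_fun g}"
    using f by (intro CollectI exI[of _ 1] exI[of _ f]) auto
qed



lemma poly_exp_lim: "((\<lambda>y. poly q y * exp (- y)) \<longlongrightarrow> (0::real)) at_top"
proof -
  have "((\<lambda>y. \<Sum>i\<le>degree q. coeff q i * (y ^ i / exp y)) \<longlongrightarrow> (\<Sum>i\<le>degree q. coeff q i * 0)) at_top"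
    by (intro tendsto_sum tendsto_mult tendsto_const tendsto_power_div_exp_0)
  moreover have "(\<lambda>y. \<Sum>i\<le>degree q. coeff q i * (y ^ i / exp y)) = (\<lambda>y. poly q y * exp (- y))"
    by (auto simp: fun_eq_iff poly_altdef sum_distrib_right exp_minus divide_inverse mult.assoc)
  ultimately show ?thesis by simp
qed

definition ep :: "real poly \<Rightarrow> real \<Rightarrow> real" where
  "ep p x = (if 0 < x then poly p (inverse x) * exp (- inverse x) else 0)"

definition Dp :: "real poly \<Rightarrow> real poly" where
  "Dp p = [:0,0,1:] * (p - pderiv p)"

lemma ep_deriv: "(ep p has_real_derivative ep (Dp p) x) (at x)"
proof (cases "x > 0")
  case True
  have d: "((\<lambda>x. poly p (inverse x) * exp (- inverse x)) has_real_derivative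
     poly (pderiv p) (inverse x) * (- inverse (x^2)) * exp (- inverse x) +
     poly p (inverse x) * (exp (- inverse x) * inverse (x^2))) (at x)"
    using True
    by (auto intro!: derivative_eq_intros DERIV_chain2[OF poly_DERIV] simp: power2_eq_square)
  have e: "poly (pderiv p) (inverse x) * (- inverse (x^2)) * exp (- inverse x) +
     poly p (inverse x) * (exp (- inverse x) * inverse (x^2)) = ep (Dp p) x"
    using True by (simp add: ep_def Dp_def algebra_simps power2_eq_square)
  show ?thesis
    by (rule has_field_derivative_transform_within_open[OF d[unfolded e], of "{0<..}"]) (use True in \<open>auto simp: ep_def\<close>)
next
  case False
  show ?thesis
  proof (cases "x < 0")
    case True
    have "((\<lambda>x. 0) has_real_derivative ep (Dp p) x) (at x)" using True by (simp add: ep_def)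
    then show ?thesis
      by (rule has_field_derivative_transform_within_open[of _ _ _ "{..<0}"]) (use True in \<open>auto simp: ep_def\<close>)
  next
    case False
    with \<open>\<not> x > 0\<close> have x0: "x = 0" by simp
    have l: "((\<lambda>h. (ep p (0 + h) - ep p 0) / h) \<longlongrightarrow> 0) (at_left 0)"
    proof (rule tendsto_eventually)
      show "\<forall>\<^sub>F h in at_left 0. (ep p (0 + h) - ep p 0) / h = 0"
      proof -
        have "\<forall>\<^sub>F h in at_left (0::real). h \<in> {-1<..<0}" by (rule eventually_at_left_real) simp
        then show ?thesis by eventually_elim (auto simp: ep_def)
      qed
    qed
    have r0: "((\<lambda>h. poly ([:0,1:] * p) (inverse h) * exp (- inverse h)) \<longlongrightarrow> 0) (at_right 0)"
      by (rule filterlim_compose[OF poly_exp_lim filterlim_inverse_at_top_right])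
    have r: "((\<lambda>h. (ep p (0 + h) - ep p 0) / h) \<longlongrightarrow> 0) (at_right 0)"
    proof (rule Lim_transform_eventually[OF r0])
      show "\<forall>\<^sub>F h in at_right 0. poly ([:0,1:] * p) (inverse h) * exp (- inverse h) = (ep p (0 + h) - ep p 0) / h"
      proof -
        have "\<forall>\<^sub>F h in at_right (0::real). h \<in> {0<..<1}" by (rule eventually_at_right_real) simp
        then show ?thesis by eventually_elim (auto simp: ep_def divide_inverse)
      qed
    qed
    have "ep (Dp p) 0 = 0" by (simp add: ep_def)
    then show ?thesis unfolding x0 DERIV_def using filterlim_split_at[OF l r] by simp
  qed
qed

lemma ep_smooth: "smooth_fun (ep p)"
proof (rule sm_class[where C="{ep q | q. True}"])
  fix g assume "g \<in> {ep q | q. True}"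
  then obtain q where g: "g = ep q" by blast
  have "deriv g = ep (Dp q)" using ep_deriv g DERIV_imp_deriv by blast
  then show "(\<forall>x. g differentiable (at x)) \<and> deriv g \<in> {ep q | q. True}"
    using ep_deriv g real_differentiable_def by blast
qed auto

definition ee :: "real \<Rightarrow> real" where "ee = ep 1"

lemma ee_smooth: "smooth_fun ee" by (simp add: ee_def ep_smooth)
lemma ee_pos: "x > 0 \<Longrightarrow> ee x > 0" by (simp add: ee_def ep_def)
lemma ee_zero: "x \<le> 0 \<Longrightarrow> ee x = 0" by (simp add: ee_def ep_def)
lemma ee_nonneg: "ee x \<ge> 0" by (simp add: ee_def ep_def)

definition bump :: "real \<Rightarrow> real" where "bump x = ee x * ee (1 - x)"

lemma bump_smooth: "smooth_fun bump"
proof -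
  have "smooth_fun (\<lambda>x. ee ((-1) * x + 1))" by (rule sm_affine[OF ee_smooth])
  then show ?thesis unfolding bump_def[abs_def] using sm_mult[OF ee_smooth] by simp
qed

lemma bump_nonneg: "bump x \<ge> 0" by (simp add: bump_def ee_nonneg)
lemma bump_zero: "x \<le> 0 \<or> x \<ge> 1 \<Longrightarrow> bump x = 0" by (auto simp: bump_def ee_zero)
lemma bump_pos: "0 < x \<Longrightarrow> x < 1 \<Longrightarrow> bump x > 0" by (simp add: bump_def ee_pos)



lemma anti_deriv:
  assumes cont: "\<And>x. isCont \<psi> x" and z: "\<And>y. y \<le> L \<Longrightarrow> \<psi> y = 0"
  shows "((\<lambda>x. integral {L..x} \<psi>) has_real_derivative \<psi> x) (at x)"
proof -
  define L' where "L' = min x L - 1"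
  have co: "continuous_on S \<psi>" for S using cont by (simp add: continuous_at_imp_continuous_on)
  have eq: "integral {L'..y} \<psi> = integral {L..y} \<psi>" if "y \<in> {L'<..}" for y
  proof -
    have z0: "integral {L'..t} \<psi> = 0" if "t \<le> L" for t
    proof -
      have "integral {L'..t} \<psi> = integral {L'..t} (\<lambda>_. 0::real)"
        by (rule integral_cong) (use z that in auto)
      then show ?thesis by simp
    qed
    show ?thesis
    proof (cases "y \<ge> L")
      case True
      have "integral {L'..y} \<psi> = integral {L'..L} \<psi> + integral {L..y} \<psi>"
        using True L'_def by (intro Henstock_Kurzweil_Integration.integral_combine[symmetric]
            integrable_continuous_real co) auto
      then show ?thesis using z0[of L] by simp
    next
      case False
      then show ?thesis using z0[of y] by simp
    qed
  qed
  have "((\<lambda>y. integral {L'..y} \<psi>) has_real_derivative \<psi> x) (at x within {L'..x+1})"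
    by (rule integral_has_real_derivative[OF co]) (auto simp: L'_def)
  then have "((\<lambda>y. integral {L'..y} \<psi>) has_real_derivative \<psi> x) (at x)"
    by (subst (asm) at_within_Icc_at) (auto simp: L'_def)
  then show ?thesis
    by (rule has_field_derivative_transform_within_open[of _ _ _ "{L'<..}"]) (use eq L'_def in auto)
qed

lemma int_supp:
  fixes \<psi> :: "real \<Rightarrow> real"
  assumes cont: "\<And>x. isCont \<psi> x" and z: "\<And>x. x \<notin> {c..d} \<Longrightarrow> \<psi> x = 0"
    and "a \<le> c" "d \<le> b"
  shows "integral {a..b} \<psi> = integral {c..d} \<psi>"
proof (cases "c \<le> d")
  case False
  then have "\<psi> = (\<lambda>_. 0)" using z by auto
  then show ?thesis by simp
next
  case True
  have co: "continuous_on S \<psi>" for S using cont by (simp add: continuous_at_imp_continuous_on)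
  have i: "\<psi> integrable_on S" if "S = {p..q}" for S p q using that co integrable_continuous_real by blast
  have z1: "integral {a..c} \<psi> = 0"
  proof -
    have "integral {a..c} \<psi> = integral {a..c} (\<lambda>_. 0::real)"
      by (rule integral_spike[of "{c}"]) (use z in auto)
    then show ?thesis by simp
  qed
  have z2: "integral {d..b} \<psi> = 0"
  proof -
    have "integral {d..b} \<psi> = integral {d..b} (\<lambda>_. 0::real)"
      by (rule integral_spike[of "{d}"]) (use z in auto)
    then show ?thesis by simp
  qed
  have "integral {a..b} \<psi> = integral {a..c} \<psi> + integral {c..b} \<psi>"
    using assms True by (intro Henstock_Kurzweil_Integration.integral_combine[symmetric] i) auto
  also have "integral {c..b} \<psi> = integral {c..d} \<psi> + integral {d..b} \<psi>"
    using assms True by (intro Henstock_Kurzweil_Integration.integral_combine[symmetric] i) auto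
  finally show ?thesis using z1 z2 by simp
qed

definition kap :: real where "kap = integral {0..1} bump"

lemma bump_cont: "isCont bump x" using bump_smooth sm_isCont by blast

lemma kap_pos: "kap > 0"
proof -
  have co: "continuous_on {0..1} bump" using bump_smooth sm_cont_on by blast
  have ge: "kap \<ge> 0" unfolding kap_def
    by (rule integral_nonneg[OF integrable_continuous_real[OF co]]) (simp add: bump_nonneg)
  have "kap \<noteq> 0"
  proof
    assume "kap = 0"
    then have "\<forall>x\<in>{0..1}. bump x = 0" using integral_eq_0_iff[OF co] bump_nonneg kap_def by auto
    then show False using bump_pos[of "1/2"] by auto
  qed
  then show ?thesis using ge by simp
qed

definition sstep :: "real \<Rightarrow> real" where "sstep x = integral {0..x} bump / kap"

lemma sstep_deriv: "(sstep has_real_derivative bump x / kap) (at x)"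
  unfolding sstep_def[abs_def]
  by (intro DERIV_cdivide anti_deriv bump_cont) (simp add: bump_zero)

lemma sstep_smooth: "smooth_fun sstep"
proof (rule sm_by_deriv[OF sstep_deriv])
  show "smooth_fun (\<lambda>x. bump x / kap)"
    using sm_cmult[OF bump_smooth, of "1/kap"] by simp
qed

lemma sstep_0: "x \<le> 0 \<Longrightarrow> sstep x = 0"
  by (cases "x = 0") (auto simp: sstep_def)

lemma sstep_1: "x \<ge> 1 \<Longrightarrow> sstep x = 1"
proof -
  assume x: "x \<ge> 1"
  have "integral {0..x} bump = integral {0..1} bump"
    by (rule int_supp[OF bump_cont]) (use x bump_zero in auto)
  then show ?thesis using kap_pos by (simp add: sstep_def kap_def)
qed

lemma sstep_bounds: "0 \<le> sstep x \<and> sstep x \<le> 1"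
proof -
  have co: "continuous_on S bump" for S using bump_smooth sm_cont_on by blast
  have i: "bump integrable_on {p..q}" for p q using co integrable_continuous_real by blast
  have "0 \<le> integral {0..x} bump" by (rule integral_nonneg[OF i]) (simp add: bump_nonneg)
  moreover have "integral {0..x} bump \<le> kap"
  proof (cases "x \<le> 1")
    case True
    then show ?thesis unfolding kap_def
      by (intro integral_subset_le i) (auto simp: bump_nonneg)
  next
    case False
    then show ?thesis using sstep_1[of x] kap_pos by (simp add: sstep_def)
  qed
  ultimately show ?thesis using kap_pos by (simp add: sstep_def)
qed

definition chi :: "real \<Rightarrow> real \<Rightarrow> real \<Rightarrow> real \<Rightarrow> real" where
  "chi a b k x = sstep (k * (x - a) - 1) * sstep (k * (b - x) - 1)"

lemma chi_smooth: "smooth_fun (chi a b k)"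
proof -
  have 1: "smooth_fun (\<lambda>x. sstep (k * x + (- k * a - 1)))" by (rule sm_affine[OF sstep_smooth])
  have 2: "smooth_fun (\<lambda>x. sstep ((-k) * x + (k * b - 1)))" by (rule sm_affine[OF sstep_smooth])
  show ?thesis using sm_mult[OF 1 2] unfolding chi_def[abs_def] by (simp add: algebra_simps)
qed

lemma chi_bounds: "0 \<le> chi a b k x \<and> chi a b k x \<le> 1"
  using sstep_bounds[of "k * (x - a) - 1"] sstep_bounds[of "k * (b - x) - 1"]
  by (auto simp: chi_def intro: mult_le_one)

lemma chi_zero:
  assumes k: "k > 0" and x: "x \<le> a + 1/k \<or> x \<ge> b - 1/k"
  shows "chi a b k x = 0"
proof -
  have "k * (x - a) - 1 \<le> 0 \<or> k * (b - x) - 1 \<le> 0"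
    using x k by (auto simp: field_simps)
  then show ?thesis by (auto simp: chi_def sstep_0)
qed

lemma chi_one:
  assumes k: "k > 0" and x: "a + 2/k \<le> x" "x \<le> b - 2/k"
  shows "chi a b k x = 1"
proof -
  have "k * (x - a) - 1 \<ge> 1" "k * (b - x) - 1 \<ge> 1"
    using x k by (auto simp: field_simps)
  then show ?thesis by (auto simp: chi_def sstep_1)
qed

lemma chi_test:
  assumes "0 \<le> a" "b \<le> 1" "k > 0"
  shows "test_fun 0 1 (chi a b k)"
proof -
  have "1/k > 0" using assms by simp
  then have "a + 1/k > 0" "b - 1/k < 1" using assms by linarith+
  moreover have "\<forall>x. x \<notin> {a + 1/k..b - 1/k} \<longrightarrow> chi a b k x = 0"
    using chi_zero[OF assms(3)] by auto
  ultimately show ?thesis unfolding test_fun_def using chi_smooth by blast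
qed

lemma chi_lim: "(\<lambda>k. chi a b (real k) x) \<longlonglongrightarrow> indicator {a<..<b} x"
proof (cases "a < x \<and> x < b")
  case True
  obtain N :: nat where N: "real N > 2 / min (x - a) (b - x)" using reals_Archimedean2 by blast
  have "\<forall>\<^sub>F k in sequentially. chi a b (real k) x = indicator {a<..<b} x"
  proof (rule eventually_sequentiallyI[of "N"])
    fix k assume k: "N \<le> k"
    have mpos: "min (x - a) (b - x) > 0" using True by simp
    have kp: "real k > 2 / min (x - a) (b - x)" using N k by linarith
    have kpos: "real k > 0" using kp mpos by (smt (verit) divide_pos_pos)
    have k2: "2 < real k * min (x - a) (b - x)" using kp mpos by (simp add: divide_less_eq mult.commute)
    have h1: "real k * min (x-a) (b-x) \<le> real k * (x - a)" "real k * min (x-a) (b-x) \<le> real k * (b - x)"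
      by (intro mult_left_mono; simp)+
    have "2 < real k * (x - a)" "2 < real k * (b - x)" using k2 h1 by linarith+
    then have "2 / real k < x - a" "2 / real k < b - x" using kpos by (simp_all add: divide_less_eq mult.commute)
    then have "a + 2 / real k \<le> x" "x \<le> b - 2 / real k" by auto
    then show "chi a b (real k) x = indicator {a<..<b} x"
      using True kpos chi_one by auto
  qed
  then show ?thesis by (rule tendsto_eventually)
next
  case False
  have "\<forall>\<^sub>F k in sequentially. chi a b (real k) x = indicator {a<..<b} x"
  proof (rule eventually_sequentiallyI[of "1"])
    fix k :: nat assume k: "1 \<le> k"
    then have kpos: "real k > 0" by simp
    have "x \<le> a + 1/real k \<or> x \<ge> b - 1/real k" using False kpos
      by (smt (verit) divide_pos_pos)
    then show "chi a b (real k) x = indicator {a<..<b} x"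
      using False kpos by (subst chi_zero) auto
  qed
  then show ?thesis by (rule tendsto_eventually)
qed

lemma test_anti:
  assumes t: "test_fun 0 1 \<psi>" and m: "integral {0..1} \<psi> = 0"
  shows "test_fun 0 1 (\<lambda>x. integral {0..x} \<psi>)" and "deriv (\<lambda>x. integral {0..x} \<psi>) = \<psi>"
proof -
  obtain c d where cd: "0 < c" "d < 1" "\<And>x. x \<notin> {c..d} \<Longrightarrow> \<psi> x = 0" and s: "smooth_fun \<psi>"
    using t unfolding test_fun_def by blast
  have cont: "\<And>x. isCont \<psi> x" using s sm_isCont by blast
  have D: "((\<lambda>x. integral {0..x} \<psi>) has_real_derivative \<psi> x) (at x)" for x
    by (rule anti_deriv[OF cont]) (use cd in auto)
  show dd: "deriv (\<lambda>x. integral {0..x} \<psi>) = \<psi>" using D DERIV_imp_deriv by blast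
  have sm: "smooth_fun (\<lambda>x. integral {0..x} \<psi>)" by (rule sm_by_deriv[OF D s])
  have z: "integral {0..x} \<psi> = 0" if "x \<notin> {c..d}" for x
  proof (cases "x < c")
    case True
    show ?thesis
    proof (cases "x < 0")
      case True then show ?thesis by simp
    next
      case False
      have "integral {0..x} \<psi> = integral {0..x} (\<lambda>_. 0::real)"
        by (rule integral_cong) (use cd True in auto)
      then show ?thesis by simp
    qed
  next
    case False
    with that have x: "x > d" by auto
    show ?thesis
    proof (cases "c \<le> d")
      case True
      have "integral {0..x} \<psi> = integral {c..d} \<psi>"
        by (rule int_supp[OF cont cd(3)]) (use cd x in auto)
      also have "\<dots> = integral {0..1} \<psi>"
        by (rule int_supp[OF cont cd(3), symmetric]) (use cd in auto)
      finally show ?thesis using m by simp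
    next
      case False
      then have "\<psi> = (\<lambda>_. 0)" using cd by auto
      then show ?thesis by simp
    qed
  qed
  show "test_fun 0 1 (\<lambda>x. integral {0..x} \<psi>)"
    unfolding test_fun_def using sm z cd by blast
qed



lemma fl_measure:
  fixes F :: "real \<Rightarrow> real"
  assumes F: "integrable lebesgue F"
    and H: "\<And>x. (LINT y|lebesgue. indicator {x<..} y * F y) = 0"
  shows "AE x in lebesgue. F x = 0"
proof -
  have Fm: "F \<in> borel_measurable (completion lborel)" using F by auto
  obtain F' where F'm: "F' \<in> borel_measurable lborel" and ae: "AE x in lborel. F x = F' x"
    using completion_ex_borel_measurable_real[OF Fm] by blast
  have F'm2[measurable]: "F' \<in> borel_measurable borel" using F'm by simp
  have aeL: "AE x in lebesgue. F x = F' x" using AE_completion[OF ae] .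
  have iF'L: "integrable lebesgue F'" using integrable_cong_AE_imp[OF F _ aeL] F'm
    by (simp add: measurable_completion)
  have iF': "integrable lborel F'" using iF'L integrable_completion[OF F'm] by simp
  have H': "(LINT y|lborel. indicator {x<..} y * F' y) = 0" for x
  proof -
    have "(LINT y|lebesgue. indicator {x<..} y * F y) = (LINT y|lebesgue. indicator {x<..} y * F' y)"
    proof (rule integral_cong_AE)
      have i: "indicator {x<..} \<in> borel_measurable lebesgue"
        by (rule borel_measurable_indicator) simp
      show "(\<lambda>y. indicator {x<..} y * F y) \<in> borel_measurable lebesgue"
        using Fm i by (intro borel_measurable_times) auto
      show "(\<lambda>y. indicator {x<..} y * F' y) \<in> borel_measurable lebesgue"
        using F'm i by (intro borel_measurable_times) (auto simp: measurable_completion)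
      show "AE y in lebesgue. indicator {x<..} y * F y = indicator {x<..} y * F' y"
        using aeL by eventually_elim simp
    qed
    also have "\<dots> = (LINT y|lborel. indicator {x<..} y * F' y)"
      by (rule integral_completion) simp
    finally show ?thesis using H[of x] by simp
  qed
  define M1 where "M1 = density lborel (\<lambda>y. ennreal (F' y))"
  define M2 where "M2 = density lborel (\<lambda>y. ennreal (- F' y))"
  have e1: "emeasure M1 {x<..} = (\<integral>\<^sup>+y. ennreal (indicator {x<..} y * F' y) \<partial>lborel)" for x
    unfolding M1_def by (subst emeasure_density) (auto intro!: nn_integral_cong split: split_indicator)
  have e2: "emeasure M2 {x<..} = (\<integral>\<^sup>+y. ennreal (- (indicator {x<..} y * F' y)) \<partial>lborel)" for x
    unfolding M2_def by (subst emeasure_density) (auto intro!: nn_integral_cong split: split_indicator)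
  have ig: "integrable lborel (\<lambda>y. indicator {x<..} y * F' y)" for x
    using integrable_mult_indicator[of "{x<..}" lborel F'] iF' by simp
  have "M1 = M2"
  proof (rule measure_eqI_lessThan)
    show "sets M1 = sets borel" "sets M2 = sets borel" by (simp_all add: M1_def M2_def)
    fix x
    show "emeasure M1 {x<..} < \<infinity>" using integrableD(2)[OF ig[of x]] e1 by (simp add: top.not_eq_extremum)
    have "0 = enn2real (\<integral>\<^sup>+y. ennreal (indicator {x<..} y * F' y) \<partial>lborel)
         - enn2real (\<integral>\<^sup>+y. ennreal (- (indicator {x<..} y * F' y)) \<partial>lborel)"
      using H'[of x] real_lebesgue_integral_def[OF ig[of x]] by simp
    then have "enn2real (\<integral>\<^sup>+y. ennreal (indicator {x<..} y * F' y) \<partial>lborel)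
         = enn2real (\<integral>\<^sup>+y. ennreal (- (indicator {x<..} y * F' y)) \<partial>lborel)" by simp
    moreover have "(\<integral>\<^sup>+y. ennreal (indicator {x<..} y * F' y) \<partial>lborel) < top"
       "(\<integral>\<^sup>+y. ennreal (- (indicator {x<..} y * F' y)) \<partial>lborel) < top"
      using integrableD(2,3)[OF ig[of x]] by (simp_all add: top.not_eq_extremum)
    ultimately show "emeasure M1 {x<..} = emeasure M2 {x<..}"
      using e1 e2 by (metis ennreal_enn2real)
  qed
  then have "AE y in lborel. ennreal (F' y) = ennreal (- F' y)"
    unfolding M1_def M2_def by (intro sigma_finite_measure.density_unique[OF sigma_finite_lborel]) auto
  then have "AE y in lborel. F' y = 0"
    by eventually_elim (smt (verit) ennreal_eq_0_iff ennreal_inj)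
  then have "AE y in lebesgue. F' y = 0" by (rule AE_completion)
  with aeL show ?thesis by eventually_elim simp
qed



lemma cont_bound:
  fixes f :: "real \<Rightarrow> real"
  assumes "continuous_on {a..b} f"
  shows "\<exists>B>0. \<forall>x\<in>{a..b}. \<bar>f x\<bar> \<le> B"
proof -
  have "compact (f ` {a..b})" by (rule compact_continuous_image[OF assms]) simp
  then have "bounded (f ` {a..b})" by (rule compact_imp_bounded)
  then show ?thesis unfolding bounded_pos by auto
qed

lemma L2_integrable:
  assumes "L2_on a b u"
  shows "integrable (lebesgue_on {a..b}) u"
proof -
  have m: "u \<in> borel_measurable (lebesgue_on {a..b})" and s: "integrable (lebesgue_on {a..b}) (\<lambda>x. (u x)\<^sup>2)"
    using assms by (auto simp: L2_on_def)
  have "integrable (lebesgue_on {a..b}) (\<lambda>x. 1 + (u x)\<^sup>2)" using s by simp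
  then show ?thesis
  proof (rule Bochner_Integration.integrable_bound)
    show "u \<in> borel_measurable (lebesgue_on {a..b})" by (rule m)
    show "AE x in lebesgue_on {a..b}. norm (u x) \<le> norm (1 + (u x)\<^sup>2)"
    proof (rule AE_I2)
      fix x
      have "\<bar>u x\<bar> \<le> 1 + (u x)\<^sup>2"
      proof (cases "\<bar>u x\<bar> \<le> 1")
        case True then show ?thesis by (smt (verit) zero_le_power2)
      next
        case False
        then have "\<bar>u x\<bar> * 1 \<le> \<bar>u x\<bar> * \<bar>u x\<bar>" by (intro mult_left_mono) auto
        then show ?thesis by (simp add: power2_eq_square)
      qed
      then show "norm (u x) \<le> norm (1 + (u x)\<^sup>2)" by simp
    qed
  qed
qed

lemma int_mult_cont:
  fixes f c :: "real \<Rightarrow> real"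
  assumes f: "integrable (lebesgue_on {a..b}) f" and c: "continuous_on {a..b} c"
  shows "integrable (lebesgue_on {a..b}) (\<lambda>x. f x * c x)"
proof -
  obtain B where B: "B > 0" "\<And>x. x \<in> {a..b} \<Longrightarrow> \<bar>c x\<bar> \<le> B" using cont_bound[OF c] by blast
  have "integrable (lebesgue_on {a..b}) (\<lambda>x. B * f x)" using f by simp
  then show ?thesis
  proof (rule Bochner_Integration.integrable_bound)
    show "(\<lambda>x. f x * c x) \<in> borel_measurable (lebesgue_on {a..b})"
      using f continuous_imp_measurable_on_sets_lebesgue[OF c] by (intro borel_measurable_times) auto
    show "AE x in lebesgue_on {a..b}. norm (f x * c x) \<le> norm (B * f x)"
    proof (rule AE_I2)
      fix x assume "x \<in> space (lebesgue_on {a..b})"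
      then have "\<bar>c x\<bar> \<le> B" using B by simp
      then have "\<bar>f x\<bar> * \<bar>c x\<bar> \<le> \<bar>f x\<bar> * B" by (intro mult_left_mono) auto
      then show "norm (f x * c x) \<le> norm (B * f x)" using B by (simp add: abs_mult mult.commute)
    qed
  qed
qed

lemma HK_eq:
  fixes f :: "real \<Rightarrow> real"
  assumes "integrable (lebesgue_on {a..b}) f"
  shows "f integrable_on {a..b}" "integral\<^sup>L (lebesgue_on {a..b}) f = integral {a..b} f"
  using integrable_on_lebesgue_on[OF assms] lebesgue_integral_eq_integral[OF assms] by auto

lemma test_zero_ends:
  assumes "test_fun 0 1 \<phi>" shows "\<phi> 0 = 0" "\<phi> 1 = 0"
  using assms unfolding test_fun_def by force+

lemma test_smooth: "test_fun a b \<phi> \<Longrightarrow> smooth_fun \<phi>"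
  unfolding test_fun_def by blast

lemma X_bounded:
  assumes X: "X_space u"
  shows "\<exists>M. AE t in lebesgue_on {0..1}. \<bar>u t\<bar> \<le> M"
proof -
  obtain g1 g2 where Lu: "L2_on 0 1 u" and Lg1: "L2_on 0 1 g1" and wd: "weak_deriv_on 0 1 u g1"
    and cg1: "continuous_on {0..1} g1"
    using X unfolding X_space_def by blast
  define G where "G x = integral {0..x} g1" for x
  have iu: "integrable (lebesgue_on {0..1}) u" using L2_integrable[OF Lu] .
  have cG: "continuous_on {0..1} G" unfolding G_def[abs_def]
    by (rule indefinite_integral_continuous_1[OF integrable_continuous_real[OF cg1]])
  have iG: "integrable (lebesgue_on {0..1}) G" by (rule continuous_imp_integrable_real[OF cG])
  define w where "w x = u x - G x" for x
  have iw: "integrable (lebesgue_on {0..1}) w" unfolding w_def[abs_def] using iu iG by simp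
  have iwc: "integrable (lebesgue_on {0..1}) (\<lambda>x. w x * c x)" if "continuous_on {0..1} c" for c
    using int_mult_cont[OF iw that] .
  have hwc: "(\<lambda>x. w x * c x) integrable_on {0..1}" if "continuous_on {0..1} c" for c
    using HK_eq(1)[OF iwc[OF that]] .
  have sc: "continuous_on S \<phi>" if "smooth_fun \<phi>" for S \<phi> using that sm_cont_on by blast
  have ibp: "integral {0..1} (\<lambda>x. G x * deriv \<phi> x) = - integral {0..1} (\<lambda>x. g1 x * \<phi> x)"
    if t: "test_fun 0 1 \<phi>" for \<phi>
  proof -
    have s: "smooth_fun \<phi>" using t by (rule test_smooth)
    have d: "((\<lambda>x. G x * \<phi> x) has_vector_derivative (g1 x * \<phi> x + G x * deriv \<phi> x)) (at x within {0..1})"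
      if x: "x \<in> {0..1}" for x
    proof -
      have dG: "(G has_real_derivative g1 x) (at x within {0..1})"
        unfolding G_def[abs_def] by (rule integral_has_real_derivative[OF cg1 x])
      have dp: "(\<phi> has_real_derivative deriv \<phi> x) (at x within {0..1})"
        using sm_has_deriv[OF s] by (rule has_field_derivative_at_within)
      show ?thesis using DERIV_mult'[OF dG dp]
        by (simp add: has_real_derivative_iff_has_vector_derivative[symmetric] algebra_simps)
    qed
    have "((\<lambda>x. g1 x * \<phi> x + G x * deriv \<phi> x) has_integral (G 1 * \<phi> 1 - G 0 * \<phi> 0)) {0..1}"
      by (rule fundamental_theorem_of_calculus[OF _ d]) auto
    then have "((\<lambda>x. g1 x * \<phi> x + G x * deriv \<phi> x) has_integral 0) {0..1}"
      using test_zero_ends[OF t] by simp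
    then have "integral {0..1} (\<lambda>x. g1 x * \<phi> x + G x * deriv \<phi> x) = 0" by (rule integral_unique)
    moreover have "integral {0..1} (\<lambda>x. g1 x * \<phi> x + G x * deriv \<phi> x) =
        integral {0..1} (\<lambda>x. g1 x * \<phi> x) + integral {0..1} (\<lambda>x. G x * deriv \<phi> x)"
      by (intro integral_add integrable_continuous_real continuous_intros cg1 cG sc s sm_deriv)
    ultimately show ?thesis by simp
  qed
  have wz: "integral {0..1} (\<lambda>x. w x * deriv \<phi> x) = 0" if t: "test_fun 0 1 \<phi>" for \<phi>
  proof -
    have s: "smooth_fun \<phi>" using t by (rule test_smooth)
    have cd: "continuous_on {0..1} (deriv \<phi>)" using sc sm_deriv[OF s] by blast
    have h1: "(\<lambda>x. u x * deriv \<phi> x) integrable_on {0..1}" using HK_eq(1)[OF int_mult_cont[OF iu cd]] .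
    have h2: "(\<lambda>x. G x * deriv \<phi> x) integrable_on {0..1}"
      by (intro integrable_continuous_real continuous_intros cG cd)
    have "integral {0..1} (\<lambda>x. w x * deriv \<phi> x) = integral {0..1} (\<lambda>x. u x * deriv \<phi> x - G x * deriv \<phi> x)"
      by (simp add: w_def algebra_simps)
    also have "\<dots> = integral {0..1} (\<lambda>x. u x * deriv \<phi> x) - integral {0..1} (\<lambda>x. G x * deriv \<phi> x)"
      by (rule integral_diff[OF h1 h2])
    finally show ?thesis using ibp[OF t] wd t unfolding weak_deriv_on_def by simp
  qed
  have wpsi: "integral {0..1} (\<lambda>x. w x * \<psi> x) = 0" if t: "test_fun 0 1 \<psi>" and m: "integral {0..1} \<psi> = 0" for \<psi>
    using wz[OF test_anti(1)[OF t m]] test_anti(2)[OF t m] by simp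
  define \<rho> where "\<rho> = chi 0 1 4"
  have t\<rho>: "test_fun 0 1 \<rho>" unfolding \<rho>_def by (rule chi_test) auto
  have c\<rho>: "continuous_on S \<rho>" for S using sc test_smooth[OF t\<rho>] by blast
  define r where "r = integral {0..1} \<rho>"
  have rpos: "r > 0"
  proof -
    have ge: "r \<ge> 0" unfolding r_def
      by (rule integral_nonneg[OF integrable_continuous_real[OF c\<rho>]]) (simp add: \<rho>_def chi_bounds)
    have "r \<noteq> 0"
    proof
      assume "r = 0"
      then have "\<forall>x\<in>{0..1}. \<rho> x = 0" using integral_eq_0_iff[OF c\<rho>] chi_bounds r_def \<rho>_def by auto
      moreover have "\<rho> (1/2) = 1" unfolding \<rho>_def by (rule chi_one) auto
      ultimately show False by auto
    qed
    then show ?thesis using ge by simp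
  qed
  define K where "K = integral {0..1} (\<lambda>x. w x * \<rho> x) / r"
  have wchi: "integral {0..1} (\<lambda>x. w x * xi x) = K * integral {0..1} xi" if t: "test_fun 0 1 xi" for xi
  proof -
    have s: "smooth_fun xi" using t by (rule test_smooth)
    have cxi: "continuous_on S xi" for S using sc s by blast
    define \<alpha> where "\<alpha> = integral {0..1} xi / r"
    define \<psi> where "\<psi> x = xi x - \<alpha> * \<rho> x" for x
    obtain c1 d1 where cd1: "0 < c1" "d1 < 1" "\<And>x. x \<notin> {c1..d1} \<Longrightarrow> xi x = 0"
      using t unfolding test_fun_def by blast
    obtain c2 d2 where cd2: "0 < c2" "d2 < 1" "\<And>x. x \<notin> {c2..d2} \<Longrightarrow> \<rho> x = 0"
      using t\<rho> unfolding test_fun_def by blast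
    have s\<psi>: "smooth_fun \<psi>" unfolding \<psi>_def[abs_def]
      by (intro sm_diff_fun s sm_cmult test_smooth[OF t\<rho>])
    have z\<psi>: "\<forall>x. x \<notin> {min c1 c2..max d1 d2} \<longrightarrow> \<psi> x = 0"
    proof (intro allI impI)
      fix x assume "x \<notin> {min c1 c2..max d1 d2}"
      then have "x \<notin> {c1..d1}" "x \<notin> {c2..d2}" by auto
      then have "xi x = 0" "\<rho> x = 0" using cd1(3) cd2(3) by auto
      then show "\<psi> x = 0" by (simp add: \<psi>_def)
    qed
    have "0 < min c1 c2" "max d1 d2 < 1" using cd1 cd2 by auto
    then have t\<psi>: "test_fun 0 1 \<psi>" unfolding test_fun_def using s\<psi> z\<psi> by blast
    have ixi: "xi integrable_on {0..1}" by (rule integrable_continuous_real[OF cxi])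
    have i\<rho>: "(\<lambda>x. \<alpha> * \<rho> x) integrable_on {0..1}" by (intro integrable_continuous_real continuous_intros c\<rho>)
    have "integral {0..1} \<psi> = integral {0..1} xi - integral {0..1} (\<lambda>x. \<alpha> * \<rho> x)"
      unfolding \<psi>_def by (rule integral_diff[OF ixi i\<rho>])
    also have "\<dots> = 0" using rpos by (simp add: \<alpha>_def r_def)
    finally have m\<psi>: "integral {0..1} \<psi> = 0" .
    have j1: "(\<lambda>x. w x * xi x) integrable_on {0..1}" by (rule hwc[OF cxi])
    have j2: "(\<lambda>x. \<alpha> * (w x * \<rho> x)) integrable_on {0..1}" using integrable_on_cmult_left[OF hwc[OF c\<rho>], of \<alpha>] by simp
    have "0 = integral {0..1} (\<lambda>x. w x * \<psi> x)" using wpsi[OF t\<psi> m\<psi>] by simp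
    also have "\<dots> = integral {0..1} (\<lambda>x. w x * xi x - \<alpha> * (w x * \<rho> x))"
      by (simp add: \<psi>_def algebra_simps)
    also have "\<dots> = integral {0..1} (\<lambda>x. w x * xi x) - \<alpha> * integral {0..1} (\<lambda>x. w x * \<rho> x)"
      using integral_diff[OF j1 j2] by simp
    finally show ?thesis using rpos by (simp add: K_def \<alpha>_def)
  qed
  have lim: "integral\<^sup>L (lebesgue_on {0..1}) (\<lambda>x. indicator {a<..<1} x * (w x - K)) = 0"
    if a: "0 \<le> a" for a
  proof -
    let ?M = "lebesgue_on {0..(1::real)}"
    define ch where "ch k = chi a 1 (real (Suc k))" for k
    have tch: "test_fun 0 1 (ch k)" for k unfolding ch_def by (rule chi_test) (use a in auto)
    have cch: "continuous_on S (ch k)" for S k using sc test_smooth[OF tch] by blast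
    have mch: "ch k \<in> borel_measurable ?M" for k by (rule continuous_imp_measurable_on_sets_lebesgue[OF cch]) simp
    have lch: "(\<lambda>k. ch k x) \<longlonglongrightarrow> indicator {a<..<1} x" for x
      unfolding ch_def using chi_lim[of a 1 x] by (rule LIMSEQ_Suc)
    have mw: "w \<in> borel_measurable ?M" using iw by auto
    have "indicator {a<..<1} \<in> borel_measurable lebesgue"
      by (rule borel_measurable_indicator) simp
    then have mind: "indicator {a<..<1} \<in> borel_measurable ?M"
      by (rule measurable_restrict_space1)
    have L1: "(\<lambda>k. integral\<^sup>L ?M (\<lambda>x. w x * ch k x)) \<longlonglongrightarrow> integral\<^sup>L ?M (\<lambda>x. w x * indicator {a<..<1} x)"
    proof (rule integral_dominated_convergence[where w="\<lambda>x. norm (w x)"])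
      show "(\<lambda>x. w x * indicator {a<..<1} x) \<in> borel_measurable ?M"
        using mw mind by (intro borel_measurable_times) auto
      show "(\<lambda>x. w x * ch k x) \<in> borel_measurable ?M" for k
        using mw mch by (intro borel_measurable_times) auto
      show "integrable ?M (\<lambda>x. norm (w x))" using iw by simp
      show "AE x in ?M. (\<lambda>k. w x * ch k x) \<longlonglongrightarrow> w x * indicator {a<..<1} x"
        using lch by (intro AE_I2 tendsto_mult tendsto_const) auto
      show "AE x in ?M. norm (w x * ch k x) \<le> norm (w x)" for k
      proof (rule AE_I2)
        fix x
        have "\<bar>ch k x\<bar> \<le> 1" using chi_bounds unfolding ch_def by (metis abs_of_nonneg)
        then show "norm (w x * ch k x) \<le> norm (w x)"
          by (simp add: abs_mult mult_left_le)
      qed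
    qed
    have L2: "(\<lambda>k. integral\<^sup>L ?M (ch k)) \<longlonglongrightarrow> integral\<^sup>L ?M (indicator {a<..<1})"
    proof (rule integral_dominated_convergence[where w="\<lambda>x. 1"])
      show "indicator {a<..<1} \<in> borel_measurable ?M" by (rule mind)
      show "ch k \<in> borel_measurable ?M" for k by (rule mch)
      show "integrable ?M (\<lambda>x. 1::real)" by simp
      show "AE x in ?M. (\<lambda>k. ch k x) \<longlonglongrightarrow> indicator {a<..<1} x" using lch by simp
      show "AE x in ?M. norm (ch k x) \<le> 1" for k
        using chi_bounds unfolding ch_def by (intro AE_I2) (simp add: abs_le_iff)
    qed
    have eqk: "integral\<^sup>L ?M (\<lambda>x. w x * ch k x) = K * integral\<^sup>L ?M (ch k)" for k
    proof -
      have "integral\<^sup>L ?M (\<lambda>x. w x * ch k x) = integral {0..1} (\<lambda>x. w x * ch k x)"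
        using HK_eq(2)[OF iwc[OF cch]] .
      also have "\<dots> = K * integral {0..1} (ch k)" by (rule wchi[OF tch])
      also have "integral {0..1} (ch k) = integral\<^sup>L ?M (ch k)"
        using HK_eq(2)[OF continuous_imp_integrable_real[OF cch]] by simp
      finally show ?thesis .
    qed
    have "(\<lambda>k. integral\<^sup>L ?M (\<lambda>x. w x * ch k x)) \<longlonglongrightarrow> K * integral\<^sup>L ?M (indicator {a<..<1})"
      unfolding eqk by (intro tendsto_mult tendsto_const L2)
    then have E1: "integral\<^sup>L ?M (\<lambda>x. w x * indicator {a<..<1} x) = K * integral\<^sup>L ?M (indicator {a<..<1})"
      using L1 LIMSEQ_unique by blast
    have iind: "integrable ?M (indicator {a<..<1} :: real \<Rightarrow> real)"
      using mind by (intro finite_measure.integrable_const_bound[where B=1]) (auto intro: finite_measure_lebesgue_on)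
    have iwi: "integrable ?M (\<lambda>x. w x * indicator {a<..<1} x)"
    proof -
      have sub: "{a<..<1} \<subseteq> {0..1}" using a by auto
      then show ?thesis using integrable_real_mult_indicator[of "{a<..<1}" ?M w] iw by (simp add: sets_restrict_space_iff)
    qed
    have "integral\<^sup>L ?M (\<lambda>x. indicator {a<..<1} x * (w x - K)) =
        integral\<^sup>L ?M (\<lambda>x. w x * indicator {a<..<1} x - K * indicator {a<..<1} x)"
      by (simp add: algebra_simps)
    also have "\<dots> = integral\<^sup>L ?M (\<lambda>x. w x * indicator {a<..<1} x) - K * integral\<^sup>L ?M (indicator {a<..<1})"
      using iwi iind by simp
    finally show ?thesis using E1 by simp
  qed
  define F where "F y = indicator {0..1} y * (w y - K)" for y
  have iwK: "integrable (lebesgue_on {0..1}) (\<lambda>y. w y - K)" using iw by simp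
  have iF: "integrable lebesgue F"
  proof -
    have "integrable lebesgue (\<lambda>y. if y \<in> {0..1} then w y - K else 0)"
      using Lebesgue_Measure.integrable_restrict_UNIV[of "{0..1}" "\<lambda>y. w y - K"] iwK by simp
    moreover have "(\<lambda>y. if y \<in> {0..1} then w y - K else 0) = F" by (auto simp: F_def fun_eq_iff)
    ultimately show ?thesis by simp
  qed
  have HF: "(LINT y|lebesgue. indicator {x<..} y * F y) = 0" for x
  proof (cases "x < 1")
    case False
    then have "(\<lambda>y. indicator {x<..} y * F y) = (\<lambda>y. 0)"
      by (auto simp: F_def fun_eq_iff split: split_indicator)
    then show ?thesis by simp
  next
    case True
    define a where "a = max x 0"
    have a: "0 \<le> a" by (simp add: a_def)
    have ae: "AE y in lebesgue. y \<notin> {0,1}"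
      by (rule AE_not_in) (simp add: null_sets_completionI finite_imp_null_set_lborel)
    have "(LINT y|lebesgue. indicator {x<..} y * F y) =
          (LINT y|lebesgue. (if y \<in> {0..1} then indicator {a<..<1} y * (w y - K) else 0))"
    proof (rule integral_cong_AE)
      show "(\<lambda>y. indicator {x<..} y * F y) \<in> borel_measurable lebesgue"
        using iF by (intro borel_measurable_times borel_measurable_indicator) auto
      have "(\<lambda>y. indicator {a<..<1} y * (w y - K)) \<in> borel_measurable (lebesgue_on {0..1})"
        using iwK a by (intro borel_measurable_times borel_measurable_indicator) (auto simp: sets_restrict_space_iff)
      then show "(\<lambda>y. if y \<in> {0..1} then indicator {a<..<1} y * (w y - K) else 0) \<in> borel_measurable lebesgue"
        by (rule borel_measurable_if_I) simp
      show "AE y in lebesgue. indicator {x<..} y * F y = (if y \<in> {0..1} then indicator {a<..<1} y * (w y - K) else 0)"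
        using ae
      proof eventually_elim
        case (elim y)
        show ?case
        proof (cases "y \<in> {0..1}")
          case False then show ?thesis by (auto simp: F_def)
        next
          case True
          with elim have y: "0 < y" "y < 1" by auto
          have "x < y \<longleftrightarrow> a < y" using y by (auto simp: a_def)
          then show ?thesis using True y by (simp add: F_def indicator_def)
        qed
      qed
    qed
    also have "\<dots> = integral\<^sup>L (lebesgue_on {0..1}) (\<lambda>y. indicator {a<..<1} y * (w y - K))"
      by (rule Lebesgue_Measure.integral_restrict_UNIV) simp
    also have "\<dots> = 0" by (rule lim[OF a])
    finally show ?thesis .
  qed
  have aeF: "AE y in lebesgue. F y = 0" by (rule fl_measure[OF iF HF])
  have aew: "AE t in lebesgue_on {0..1}. w t = K"
  proof -
    have "AE t in lebesgue. t \<in> {0..1} \<longrightarrow> w t = K"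
      using aeF by eventually_elim (auto simp: F_def)
    then show ?thesis by (subst AE_restrict_space_iff) auto
  qed
  obtain B where B: "\<And>t. t \<in> {0..1} \<Longrightarrow> \<bar>G t\<bar> \<le> B" using cont_bound[OF cG] by blast
  have "AE t in lebesgue_on {0..1}. \<bar>u t\<bar> \<le> \<bar>K\<bar> + B"
  proof -
    have "AE t in lebesgue_on {0..1}. t \<in> {0..1}" by (rule AE_I2) simp
    with aew show ?thesis
    proof eventually_elim
      case (elim t)
      then have "u t = K + G t" by (simp add: w_def)
      then show ?case using B[OF elim(2)] by simp
    qed
  qed
  then show ?thesis by blast
qed



definition rr :: "real \<Rightarrow> real" where
  "rr x = (let t = x - 2 * of_int \<lfloor>x / 2\<rfloor> in if t \<le> 1 then t else 2 - t)"

lemma ext_rr: "ext w x = w (rr x)"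
  by (simp add: ext_def rr_def Let_def)

lemma ext_rr_fun: "ext w = (\<lambda>x. w (rr x))"
  by (simp add: fun_eq_iff ext_rr)

lemma rr_form: "0 \<le> rr x \<and> rr x \<le> 1 \<and> (\<exists>m::int. x = 2 * of_int m + rr x \<or> x = 2 * of_int m - rr x)"
proof -
  define m where "m = \<lfloor>x / 2\<rfloor>"
  define t where "t = x - 2 * of_int m"
  have "of_int m \<le> x / 2" "x / 2 < of_int m + 1" unfolding m_def by linarith+
  then have t: "0 \<le> t" "t < 2" unfolding t_def by linarith+
  have r: "rr x = (if t \<le> 1 then t else 2 - t)" by (simp add: rr_def t_def m_def Let_def)
  show ?thesis
  proof (cases "t \<le> 1")
    case True
    then show ?thesis using t r by (auto simp: t_def intro!: exI[of _ m])
  next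
    case False
    then show ?thesis using t r by (auto simp: t_def intro!: exI[of _ "m + 1"])
  qed
qed

lemma rr_char:
  assumes s: "0 \<le> s" "s \<le> 1" and x: "x = 2 * of_int m + s \<or> x = 2 * of_int m - s"
  shows "rr x = s"
proof -
  consider (p) "x = 2 * of_int m + s" | (z) "x = 2 * of_int m - s" "s = 0" | (n) "x = 2 * of_int m - s" "s > 0"
    using x s by force
  then show ?thesis
  proof cases
    case p
    have "\<lfloor>x / 2\<rfloor> = m" using p s by (intro floor_unique) auto
    then show ?thesis using p s by (simp add: rr_def Let_def)
  next
    case z
    have "\<lfloor>x / 2\<rfloor> = m" using z s by (intro floor_unique) auto
    then show ?thesis using z s by (simp add: rr_def Let_def)
  next
    case n
    have "\<lfloor>x / 2\<rfloor> = m - 1" using n s by (intro floor_unique) auto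
    then show ?thesis using n s by (auto simp: rr_def Let_def)
  qed
qed

lemma rr_range: "0 \<le> rr x" "rr x \<le> 1" using rr_form by auto

lemma rr_id: "0 \<le> x \<Longrightarrow> x \<le> 1 \<Longrightarrow> rr x = x"
  by (rule rr_char[of x x 0]) auto

lemma rr_neg: "rr (- x) = rr x"
proof -
  obtain m :: int where "x = 2 * of_int m + rr x \<or> x = 2 * of_int m - rr x" using rr_form by blast
  then have "- x = 2 * of_int (- m) + rr x \<or> - x = 2 * of_int (- m) - rr x" by auto
  then show ?thesis by (intro rr_char[of _ _ "- m"]) (auto simp: rr_range)
qed

lemma rr_plus_int: "rr (x + 2 * of_int k) = rr x"
proof -
  obtain m :: int where "x = 2 * of_int m + rr x \<or> x = 2 * of_int m - rr x" using rr_form by blast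
  then have "x + 2 * of_int k = 2 * of_int (m + k) + rr x \<or> x + 2 * of_int k = 2 * of_int (m + k) - rr x" by auto
  then show ?thesis by (intro rr_char[of _ _ "m + k"]) (auto simp: rr_range)
qed

lemma rr_plus2: "rr (x + 2) = rr x"
  using rr_plus_int[of x 1] by simp

lemma rr_2minus: "rr (2 - x) = rr x"
  using rr_plus_int[of "- x" 1] rr_neg[of x] by simp

lemma ext_periodic: "ext w (x + 2) = ext w x"
  by (simp add: ext_rr rr_plus2)

lemma ext_neg: "ext w (- x) = ext w x"
  by (simp add: ext_rr rr_neg)

lemma ext_2minus: "ext w (2 - x) = ext w x"
  by (simp add: ext_rr rr_2minus)

lemma ext_id: "0 \<le> x \<Longrightarrow> x \<le> 1 \<Longrightarrow> ext w x = w x"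
  by (simp add: ext_rr rr_id)

lemma ext_rr_cases: "\<exists>m::int. rr x = x - 2 * of_int m \<or> rr x = 2 * of_int m - x"
  using rr_form[of x] by (metis add_diff_cancel_left' diff_diff_eq2)



lemma AE_affine:
  fixes P :: "real \<Rightarrow> bool"
  assumes c: "c \<noteq> 0" and ae: "AE x in lebesgue. P x"
  shows "AE x in lebesgue. P (t + c * x)"
proof -
  have "AE x in lborel. P x" using ae by (simp add: AE_completion_iff)
  then obtain N where N: "{x \<in> space lborel. \<not> P x} \<subseteq> N" "emeasure lborel N = 0" "N \<in> sets lborel"
    by (rule AE_E)
  then have N: "N \<in> null_sets lborel" "{x \<in> space lborel. \<not> P x} \<subseteq> N" by auto
  have "AE x in lborel. x \<notin> N" using N(1) by (rule AE_not_in)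
  then have "AE x in lborel. t + c * x \<notin> N"
    using N(1) by (intro AE_borel_affine[OF c]) (auto simp: null_sets_def)
  then have "AE x in lborel. P (t + c * x)" by (rule eventually_mono) (use N(2) in auto)
  then show ?thesis by (rule AE_completion)
qed

lemma AE_shift: fixes P :: "real \<Rightarrow> bool" shows "AE x in lebesgue. P x \<Longrightarrow> AE x in lebesgue. P (x + s)"
  using AE_affine[of 1 P s] by (simp add: add.commute)

lemma AE_refl: fixes P :: "real \<Rightarrow> bool" shows "AE x in lebesgue. P x \<Longrightarrow> AE x in lebesgue. P (- x)"
  using AE_affine[of "-1" P 0] by simp

lemma AE_TR:
  assumes ae: "AE t in lebesgue_on {0..1}. Q t"
  shows "AE x in lebesgue. Q (rr x)"
proof -
  have a0: "AE t in lebesgue. t \<in> {0..1} \<longrightarrow> Q t"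
    using ae by (subst (asm) AE_restrict_space_iff) auto
  have a1: "AE x in lebesgue. \<forall>m::int. (x - 2 * of_int m \<in> {0..1} \<longrightarrow> Q (x - 2 * of_int m))"
    unfolding AE_all_countable
  proof
    fix m :: int show "AE x in lebesgue. x - 2 * of_int m \<in> {0..1} \<longrightarrow> Q (x - 2 * of_int m)"
      using AE_affine[of 1 _ "- 2 * of_int m", OF _ a0] by simp
  qed
  have a2: "AE x in lebesgue. \<forall>m::int. (2 * of_int m - x \<in> {0..1} \<longrightarrow> Q (2 * of_int m - x))"
    unfolding AE_all_countable
  proof
    fix m :: int show "AE x in lebesgue. 2 * of_int m - x \<in> {0..1} \<longrightarrow> Q (2 * of_int m - x)"
      using AE_affine[of "-1" _ "2 * of_int m", OF _ a0] by simp
  qed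
  from a1 a2 show ?thesis
  proof eventually_elim
    case (elim x)
    obtain m :: int where "rr x = x - 2 * of_int m \<or> rr x = 2 * of_int m - x" using ext_rr_cases by blast
    then show ?case using elim rr_range[of x] by auto
  qed
qed

lemma AE_ext_eq:
  assumes "AE t in lebesgue_on {0..1}. v t = F t"
  shows "AE x in lebesgue. ext v x = ext F x"
  using AE_TR[OF assms] by (simp add: ext_rr)

lemma AE_ext_bound:
  assumes "AE t in lebesgue_on {0..1}. \<bar>v t\<bar> \<le> M"
  shows "AE x in lebesgue. \<bar>ext v x\<bar> \<le> M"
  using AE_TR[OF assms] by (simp add: ext_rr)



definition Gd :: "(real \<Rightarrow> real) \<Rightarrow> bool" where
  "Gd \<phi> \<longleftrightarrow> \<phi> \<in> borel_measurable lebesgue \<and> (\<exists>M. AE x in lebesgue. \<bar>\<phi> x\<bar> \<le> M)"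

lemma Gd_const: "Gd (\<lambda>x. c)"
  unfolding Gd_def by (auto intro!: exI[of _ "\<bar>c\<bar>"])

lemma Gd_add: "Gd f \<Longrightarrow> Gd g \<Longrightarrow> Gd (\<lambda>x. f x + g x)"
  unfolding Gd_def
proof (elim conjE exE, intro conjI)
  fix M N assume a: "AE x in lebesgue. \<bar>f x\<bar> \<le> M" "AE x in lebesgue. \<bar>g x\<bar> \<le> N"
  show "\<exists>M. AE x in lebesgue. \<bar>f x + g x\<bar> \<le> M"
    by (rule exI[of _ "M + N"]) (use a in \<open>eventually_elim, auto\<close>)
qed auto

lemma Gd_mult: "Gd f \<Longrightarrow> Gd g \<Longrightarrow> Gd (\<lambda>x. f x * g x)"
  unfolding Gd_def
proof (elim conjE exE, intro conjI)
  fix M N assume a: "AE x in lebesgue. \<bar>f x\<bar> \<le> M" "AE x in lebesgue. \<bar>g x\<bar> \<le> N"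
  show "\<exists>M. AE x in lebesgue. \<bar>f x * g x\<bar> \<le> M"
  proof (rule exI[of _ "M * N"])
    show "AE x in lebesgue. \<bar>f x * g x\<bar> \<le> M * N"
      using a by eventually_elim (simp add: abs_mult mult_mono')
  qed
qed auto

lemma Gd_cmult: "Gd f \<Longrightarrow> Gd (\<lambda>x. c * f x)"
  using Gd_mult[OF Gd_const] by blast

lemma Gd_minus: "Gd f \<Longrightarrow> Gd (\<lambda>x. - f x)"
  using Gd_cmult[of f "-1"] by simp

lemma Gd_diff: "Gd f \<Longrightarrow> Gd g \<Longrightarrow> Gd (\<lambda>x. f x - g x)"
  using Gd_add[OF _ Gd_minus[of g], of f] by simp

lemma Gd_comp:
  assumes F: "continuous_on UNIV F" and f: "Gd f"
  shows "Gd (\<lambda>x. F (f x))"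
proof -
  obtain M where m: "f \<in> borel_measurable lebesgue" and M: "AE x in lebesgue. \<bar>f x\<bar> \<le> M"
    using f unfolding Gd_def by blast
  obtain B where B: "\<And>y. y \<in> {-M..M} \<Longrightarrow> \<bar>F y\<bar> \<le> B"
    using cont_bound[OF continuous_on_subset[OF F subset_UNIV], of "-M" M] by blast
  have "AE x in lebesgue. \<bar>F (f x)\<bar> \<le> B" using M by eventually_elim (intro B, auto)
  moreover have "(\<lambda>x. F (f x)) \<in> borel_measurable lebesgue" by (rule borel_measurable_continuous_on[OF F m])
  ultimately show ?thesis unfolding Gd_def by blast
qed

lemma shift_measurable: "(\<lambda>x::real. x + s) \<in> lebesgue \<rightarrow>\<^sub>M lebesgue"
proof -
  have "(\<lambda>x::real. s + (\<Sum>j\<in>Basis. ((\<lambda>_. 1) j * (x \<bullet> j)) *\<^sub>R j)) \<in> lebesgue \<rightarrow>\<^sub>M lebesgue"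
    by (rule lebesgue_affine_measurable) simp
  then show ?thesis by (simp add: add.commute)
qed

lemma Gd_shift: "Gd f \<Longrightarrow> Gd (\<lambda>x. f (x + s))"
  unfolding Gd_def
proof (elim conjE exE, intro conjI)
  fix M assume m: "f \<in> borel_measurable lebesgue" and a: "AE x in lebesgue. \<bar>f x\<bar> \<le> M"
  show "(\<lambda>x. f (x + s)) \<in> borel_measurable lebesgue"
    using measurable_compose[OF shift_measurable m] by simp
  show "\<exists>M. AE x in lebesgue. \<bar>f (x + s)\<bar> \<le> M"
    using AE_shift[OF a] by blast
qed

lemma Gd_sum: "finite I \<Longrightarrow> (\<And>i. i \<in> I \<Longrightarrow> Gd (f i)) \<Longrightarrow> Gd (\<lambda>x. \<Sum>i\<in>I. f i x)"
proof (induction I rule: finite_induct)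
  case empty then show ?case by (simp add: Gd_const)
next
  case (insert a I)
  then show ?case by (simp add: Gd_add)
qed

lemma Gd_AE: "Gd f \<Longrightarrow> AE x in lebesgue. g x = f x \<Longrightarrow> Gd g"
  unfolding Gd_def
proof (elim conjE exE, intro conjI)
  fix M assume m: "f \<in> borel_measurable lebesgue" and a: "AE x in lebesgue. \<bar>f x\<bar> \<le> M"
    and e: "AE x in lebesgue. g x = f x"
  show "g \<in> borel_measurable lebesgue"
    by (rule borel_measurable_AE[OF m]) (use e in \<open>eventually_elim, simp\<close>)
  show "\<exists>M. AE x in lebesgue. \<bar>g x\<bar> \<le> M"
    by (rule exI[of _ M]) (use a e in \<open>eventually_elim, simp\<close>)
qed

lemma Gd_intL: "Gd f \<Longrightarrow> integrable (lebesgue_on {a..b}) f"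
proof -
  assume "Gd f"
  then obtain M where m: "f \<in> borel_measurable lebesgue" and a: "AE x in lebesgue. \<bar>f x\<bar> \<le> M"
    unfolding Gd_def by blast
  interpret finite_measure "lebesgue_on {a..b}" by (rule finite_measure_lebesgue_on) simp
  show ?thesis
  proof (rule integrable_const_bound[where B=M])
    show "AE x in lebesgue_on {a..b}. norm (f x) \<le> M"
      using a by (subst AE_restrict_space_iff) (auto elim!: eventually_mono)
    show "f \<in> borel_measurable (lebesgue_on {a..b})" using m by (rule measurable_restrict_space1)
  qed
qed

lemma Gd_int: "Gd f \<Longrightarrow> f integrable_on {a..b}"
  using Gd_intL HK_eq(1) by blast

lemma Gd_L2: "Gd f \<Longrightarrow> L2_on a b f"
proof -
  assume g: "Gd f"
  have "Gd (\<lambda>x. f x * f x)" using Gd_mult[OF g g] .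
  then have "integrable (lebesgue_on {a..b}) (\<lambda>x. (f x)\<^sup>2)" using Gd_intL by (simp add: power2_eq_square)
  moreover have "f \<in> borel_measurable (lebesgue_on {a..b})"
    using g unfolding Gd_def by (auto intro: measurable_restrict_space1)
  ultimately show ?thesis unfolding L2_on_def by blast
qed

lemma meas_of_local:
  fixes f :: "real \<Rightarrow> real"
  assumes "\<And>a b. a < b \<Longrightarrow> f \<in> borel_measurable (lebesgue_on {a..b})"
  shows "f \<in> borel_measurable lebesgue"
proof -
  define u where "u i x = (if x \<in> {- real i - 1..real i + 1} then f x else 0)" for i x
  have "u i \<in> borel_measurable lebesgue" for i
    unfolding u_def by (rule borel_measurable_if_I[OF assms]) auto
  moreover have "(\<lambda>i. u i x) \<longlonglongrightarrow> f x" for x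
  proof -
    obtain N :: nat where "real N \<ge> \<bar>x\<bar>" using real_arch_simple by blast
    then have "\<forall>\<^sub>F i in sequentially. u i x = f x"
      by (intro eventually_sequentiallyI[of N]) (auto simp: u_def)
    then show ?thesis by (rule tendsto_eventually)
  qed
  ultimately show ?thesis by (intro borel_measurable_LIMSEQ_real[of lebesgue u f]) auto
qed

lemma Gd_H2per:
  assumes "H2_per f" and "AE x in lebesgue. \<bar>f x\<bar> \<le> M"
  shows "Gd f"
proof -
  have "f \<in> borel_measurable (lebesgue_on {a..b})" if "a < b" for a b
    using assms(1) that unfolding H2_per_def H2_on_def L2_on_def by blast
  then show ?thesis unfolding Gd_def using meas_of_local assms(2) by blast
qed

lemma int_AE:
  assumes "AE x in lebesgue. f x = g x"
  shows "integral S f = integral S g"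
proof -
  obtain N where N0: "{x \<in> space lebesgue. \<not> f x = g x} \<subseteq> N" "emeasure lebesgue N = 0" "N \<in> sets lebesgue"
    using assms by (rule AE_E)
  then have N: "N \<in> null_sets lebesgue" "{x \<in> space lebesgue. \<not> f x = g x} \<subseteq> N" by auto
  have "negligible N" using N(1) negligible_iff_null_sets by blast
  then show ?thesis by (rule integral_spike) (use N(2) in force)
qed

lemma int_shift:
  fixes f :: "real \<Rightarrow> real"
  shows "integral {a..b} (\<lambda>x. f (x + c)) = integral {a + c..b + c} f"
  using integral_shift_Icc_real[of a b f c] by (simp add: o_def add.commute)

lemma int_shift_per:
  fixes f :: "real \<Rightarrow> real"
  assumes g: "Gd f" and p: "\<And>x. f (x + 2) = f x" and s: "0 \<le> s" "s \<le> 2"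
  shows "integral {0..2} (\<lambda>x. f (x + s)) = integral {0..2} f"
proof -
  have i: "f integrable_on {a..b}" for a b using Gd_int[OF g] .
  have "integral {0..2} (\<lambda>x. f (x + s)) = integral {s..2 + s} f" using int_shift[of 0 2 f s] by simp
  also have "\<dots> = integral {s..2} f + integral {2..2+s} f"
    using s by (intro Henstock_Kurzweil_Integration.integral_combine[symmetric] i) auto
  also have "integral {2..2+s} f = integral {0..s} (\<lambda>x. f (x + 2))"
    using int_shift[of 0 s f 2] by (simp add: add.commute)
  also have "\<dots> = integral {0..s} f" using p by simp
  also have "integral {s..2} f + integral {0..s} f = integral {0..2} f"
    using s Henstock_Kurzweil_Integration.integral_combine[OF _ _ i, of 0 s 2] by simp
  finally show ?thesis .
qed

lemma int_ext:
  assumes g: "Gd (ext h)"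
  shows "h integrable_on {0..1}" "integral {0..2} (ext h) = 2 * integral {0..1} h"
proof -
  have i: "ext h integrable_on {a..b}" for a b using Gd_int[OF g] .
  have e1: "integral {0..1} (ext h) = integral {0..1} h"
    by (rule integral_cong) (simp add: ext_id)
  show "h integrable_on {0..1}"
    using i[of 0 1] by (rule integrable_eq) (simp add: ext_id)
  have "integral {0..2} (ext h) = integral {0..1} (ext h) + integral {1..2} (ext h)"
    by (intro Henstock_Kurzweil_Integration.integral_combine[symmetric] i) auto
  also have "integral {1..2} (ext h) = integral {1..2} (\<lambda>x. ext h (2 - x))"
    by (simp add: ext_2minus)
  also have "\<dots> = integral {1 + (-2)..2 + (-2)} (\<lambda>x. ext h (- x))"
    using int_shift[of 1 2 "\<lambda>x. ext h (- x)" "-2"] by simp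
  also have "\<dots> = integral {0..1} (ext h)"
    using Henstock_Kurzweil_Integration.integral_reflect_real[of 1 0 "ext h"] by simp
  finally show "integral {0..2} (ext h) = 2 * integral {0..1} h" using e1 by simp
qed



definition AP :: "real \<Rightarrow> real \<Rightarrow> (real \<Rightarrow> real) \<Rightarrow> bool" where
  "AP s a V \<longleftrightarrow> (AE x in lebesgue. V (x + s) = a * V x)"

lemma opT_pow: "(opT n ^^ k) v = (\<lambda>x. (-1)^k * v (x + real k / real n))"
proof (induction k)
  case 0 then show ?case by simp
next
  case (Suc k)
  show ?case
  proof
    fix x
    have "(opT n ^^ Suc k) v x = opT n ((opT n ^^ k) v) x" by simp
    also have "\<dots> = - ((opT n ^^ k) v (x + 1 / real n))" by (simp only: opT_def)
    also have "\<dots> = - ((-1)^k * v (x + 1 / real n + real k / real n))" by (simp only: Suc)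
    finally have "(opT n ^^ Suc k) v x = - ((-1)^k * v (x + 1 / real n + real k / real n))" .
    also have "x + 1 / real n + real k / real n = x + real (Suc k) / real n"
      by (simp add: add_divide_distrib)
    finally show "(opT n ^^ Suc k) v x = (-1)^(Suc k) * v (x + real (Suc k) / real n)" by simp
  qed
qed

lemma ker_Sa: "ker_cond n Sa V \<longleftrightarrow> AP (1 / real n) (-1) V"
proof -
  have "ker_cond n Sa V \<longleftrightarrow> (AE x in lebesgue. opT n V x - V x = 0)"
    by (simp add: ker_cond_def AE_completion_iff)
  also have "\<dots> \<longleftrightarrow> AP (1 / real n) (-1) V"
    unfolding AP_def opT_def by (intro arg_cong[where f="\<lambda>P. eventually P _"]) (auto simp: fun_eq_iff)
  finally show ?thesis .
qed

lemma ker_Sc: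
  assumes n: "n \<ge> 1"
  shows "ker_cond n Sc V \<longleftrightarrow> AP 1 (- ((-1)^n)) V"
proof -
  have nn: "real n / real n = 1" using n by simp
  have "ker_cond n Sc V \<longleftrightarrow> (AE x in lebesgue. (-1)^n * V (x + 1) + V x = 0)"
    by (simp only: ker_cond_def AE_completion_iff opT_pow nn subsp.case mult_1)
  also have "\<dots> \<longleftrightarrow> AP 1 (- ((-1)^n)) V"
    unfolding AP_def
  proof (intro arg_cong[where f="\<lambda>P. eventually P _"] ext iffI)
    fix x
    have e: "(-1::real)^n * (-1)^n = 1" by (simp add: power_mult_distrib[symmetric])
    assume "(-1)^n * V (x + 1) + V x = 0"
    then have q: "(-1)^n * V (x + 1) = - V x" by simp
    have "V (x + 1) = ((-1)^n * (-1)^n) * V (x + 1)" using e by simp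
    also have "\<dots> = (-1)^n * ((-1)^n * V (x + 1))" by (simp only: mult.assoc)
    also have "\<dots> = - ((-1)^n) * V x" using q by simp
    finally show "V (x + 1) = - ((-1)^n) * V x" .
  next
    fix x
    have e: "(-1::real)^n * (-1)^n = 1" by (simp add: power_mult_distrib[symmetric])
    assume "V (x + 1) = - ((-1)^n) * V x"
    then show "(-1)^n * V (x + 1) + V x = 0" using e by (simp add: mult.assoc[symmetric])
  qed
  finally show ?thesis .
qed

lemma ker_Sb: "ker_cond n Sb V \<longleftrightarrow> (AE x in lebesgue. (\<Sum>k<n. (-1)^k * V (x + real k / real n)) = 0)"
  by (simp add: ker_cond_def AE_completion_iff opT_pow)

lemma AP_mult: "AP s a V \<Longrightarrow> AP s b W \<Longrightarrow> AP s (a * b) (\<lambda>x. V x * W x)"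
  unfolding AP_def by (rule eventually_elim2) (auto simp: algebra_simps)

lemma AP_cmult: "AP s a V \<Longrightarrow> AP s a (\<lambda>x. c * V x)"
  unfolding AP_def by (erule eventually_mono) (auto simp: algebra_simps)

lemma AP_add: "AP s a V \<Longrightarrow> AP s a W \<Longrightarrow> AP s a (\<lambda>x. V x + W x)"
  unfolding AP_def by (rule eventually_elim2) (auto simp: algebra_simps)

lemma AP_affine: "AP s a V \<Longrightarrow> (a = 1 \<or> c = 0) \<Longrightarrow> AP s a (\<lambda>x. b * V x + c)"
  unfolding AP_def by (erule eventually_mono) (auto simp: algebra_simps)

lemma AP_AE: "AP s a V \<Longrightarrow> AE x in lebesgue. W x = V x \<Longrightarrow> AP s a W"
proof -
  assume ap: "AP s a V" and e: "AE x in lebesgue. W x = V x"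
  have e2: "AE x in lebesgue. W (x + s) = V (x + s)" using AE_shift[OF e] .
  show "AP s a W" using ap e e2 unfolding AP_def by eventually_elim simp
qed

lemma AP_iter: "AP s a V \<Longrightarrow> AP (real k * s) (a ^ k) V"
proof (induction k)
  case 0 then show ?case by (simp add: AP_def)
next
  case (Suc k)
  have "AE x in lebesgue. V ((x + real k * s) + s) = a * V (x + real k * s)"
    using AE_shift[OF Suc.prems[unfolded AP_def]] .
  with Suc.IH[OF Suc.prems] show ?case unfolding AP_def
    by eventually_elim (simp add: algebra_simps)
qed

lemma AP_comp_odd:
  assumes "AP s (-1) U" and "\<And>y. F (- y) = - F y"
  shows "AP s (-1) (\<lambda>x. F (U x))"
  using assms unfolding AP_def by (auto elim!: eventually_mono)

lemma AP_mean:
  assumes g: "Gd V" and p: "\<And>x. V (x + 2) = V x" and s: "0 \<le> s" "s \<le> 2" and ap: "AP s (-1) V"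
  shows "integral {0..2} V = 0"
proof -
  have "integral {0..2} (\<lambda>x. V (x + s)) = integral {0..2} V" by (rule int_shift_per[OF g p s])
  moreover have "integral {0..2} (\<lambda>x. V (x + s)) = integral {0..2} (\<lambda>x. - V x)"
    by (rule int_AE) (use ap in \<open>simp add: AP_def\<close>)
  moreover have "integral {0..2} (\<lambda>x. - V x) = - integral {0..2} V" by (rule integral_neg)
  ultimately show ?thesis by simp
qed

lemma sum_shift_identity:
  fixes V :: "real \<Rightarrow> real"
  assumes n: "n \<ge> 1"
  shows "(\<Sum>k<n. (-1)^k * V (x + 1 / real n + real k / real n)) =
         - (\<Sum>k<n. (-1)^k * V (x + real k / real n)) + V x - (-1)^n * V (x + 1)"
proof -
  define b where "b k = (-1::real)^k * V (x + real k / real n)" for k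
  have t: "(-1)^k * V (x + 1 / real n + real k / real n) = - b (Suc k)" for k
    by (simp add: b_def add_divide_distrib algebra_simps)
  have "(\<Sum>k<n. (-1)^k * V (x + 1 / real n + real k / real n)) = - (\<Sum>k<n. b (Suc k))"
    by (simp add: t sum_negf)
  also have "(\<Sum>k<n. b (Suc k)) = (\<Sum>k<Suc n. b k) - b 0"
    using sum.lessThan_Suc_shift[of b n] by simp
  also have "(\<Sum>k<Suc n. b k) = (\<Sum>k<n. b k) + b n" by simp
  also have "b n = (-1)^n * V (x + 1)" using n by (simp add: b_def)
  also have "b 0 = V x" by (simp add: b_def)
  finally show ?thesis by (simp add: b_def)
qed

lemma Sb_to_1:
  assumes n: "n \<ge> 1" and k: "ker_cond n Sb V"
  shows "AP 1 ((-1)^n) V"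
proof -
  define S where "S x = (\<Sum>k<n. (-1)^k * V (x + real k / real n))" for x
  have a1: "AE x in lebesgue. S x = 0" using k by (simp add: ker_Sb S_def)
  have a2: "AE x in lebesgue. S (x + 1 / real n) = 0" using AE_shift[OF a1] .
  show ?thesis unfolding AP_def using a1 a2
  proof eventually_elim
    case (elim x)
    have "S (x + 1 / real n) = - S x + V x - (-1)^n * V (x + 1)"
      unfolding S_def using sum_shift_identity[OF n, of V x] by (simp add: add.assoc)
    then have "(-1)^n * V (x + 1) = V x" using elim by simp
    then have "(-1)^n * ((-1)^n * V (x + 1)) = (-1)^n * V x" by simp
    then show ?case by (simp add: mult.assoc[symmetric] power_mult_distrib[symmetric])
  qed
qed

lemma Sa_to_1:
  assumes n: "n \<ge> 1" and ap: "AP (1 / real n) a V"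
  shows "AP 1 (a ^ n) V"
  using AP_iter[OF ap, of n] n by simp

lemma sum_alt:
  "(\<Sum>k<n. (-1::real)^k) = (if even n then 0 else 1)"
  by (induction n) auto

lemma deriv_sym:
  fixes g :: "real \<Rightarrow> real"
  assumes s: "\<And>x. g (- x) = c * g x" and d: "\<And>x. g differentiable (at x)"
  shows "deriv g (- x) = - c * deriv g x"
proof -
  have d1: "((\<lambda>x. g (- x)) has_real_derivative (deriv g (- x) * (-1))) (at x)"
    by (rule DERIV_chain2[OF DERIV_deriv_iff_real_differentiable[THEN iffD2, OF d]])
       (auto intro!: derivative_eq_intros)
  have d2: "((\<lambda>x. c * g x) has_real_derivative c * deriv g x) (at x)"
    by (intro DERIV_cmult DERIV_deriv_iff_real_differentiable[THEN iffD2, OF d])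
  have "(\<lambda>x. g (- x)) = (\<lambda>x. c * g x)" using s by auto
  with d1 d2 have "deriv g (- x) * (-1) = c * deriv g x" using DERIV_unique by metis
  then show ?thesis by simp
qed

lemma f2_odd:
  assumes s: "smooth_fun f" and o: "\<forall>x. f (- x) = - f x"
  shows "deriv (deriv f) (- y) = - deriv (deriv f) y"
proof -
  have e: "deriv f (- x) = deriv f x" for x
    using deriv_sym[of f "-1" x] o sm_diff[OF s] by auto
  show ?thesis
    using deriv_sym[of "deriv f" 1 y] e sm_diff[OF sm_deriv[OF s]] by auto
qed

lemma f2_cont:
  assumes s: "smooth_fun f"
  shows "continuous_on UNIV (deriv (deriv f))"
  using sm_cont_on[OF sm_deriv[OF sm_deriv[OF s]]] .

lemma Ysub_intro:
  assumes g: "Gd (ext h)" and m: "integral {0..1} h = 0" and k: "ker_cond n \<tau> (ext h)"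
    and y: "\<And>\<phi>. neumann_test \<phi> \<Longrightarrow> y \<phi> = lapD h \<phi>"
  shows "Ysub n \<tau> y"
proof -
  have L: "L2_on 0 1 (ext h)" by (rule Gd_L2[OF g])
  have L1: "L2_on 0 1 h"
  proof -
    have "h \<in> borel_measurable (lebesgue_on {0..1})"
      using L unfolding L2_on_def by (subst measurable_lebesgue_cong[where g="ext h"]) (auto simp: ext_id)
    moreover have "integrable (lebesgue_on {0..1}) (\<lambda>x. (ext h x)\<^sup>2) \<longleftrightarrow> integrable (lebesgue_on {0..1}) (\<lambda>x. (h x)\<^sup>2)"
      by (rule Bochner_Integration.integrable_cong) (auto simp: ext_id)
    ultimately have "h \<in> borel_measurable (lebesgue_on {0..1}) \<and> integrable (lebesgue_on {0..1}) (\<lambda>x. (h x)\<^sup>2)"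
      using L unfolding L2_on_def by blast
    then show ?thesis unfolding L2_on_def by blast
  qed
  have P: "L2_per (ext h)" unfolding L2_per_def
    using ext_periodic Gd_L2[OF g] int_ext(2)[OF g] m by auto
  show ?thesis unfolding Ysub_def using L1 m y P k by blast
qed

lemma neumann_int0:
  assumes "neumann_test \<phi>"
  shows "integral {0..1} (deriv (deriv \<phi>)) = 0"
proof -
  have s: "smooth_fun \<phi>" and z: "deriv \<phi> 0 = 0" "deriv \<phi> 1 = 0" using assms by (auto simp: neumann_test_def)
  have "(deriv (deriv \<phi>) has_integral (deriv \<phi> 1 - deriv \<phi> 0)) {0..1}"
  proof (rule fundamental_theorem_of_calculus)
    fix x :: real
    show "(deriv \<phi> has_vector_derivative deriv (deriv \<phi>) x) (at x within {0..1})"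
      using sm_has_deriv[OF sm_deriv[OF s], of x]
      by (simp add: has_real_derivative_iff_has_vector_derivative[symmetric] has_field_derivative_at_within)
  qed simp
  then show ?thesis using z by (simp add: integral_unique)
qed

lemma lapD_affine:
  assumes "neumann_test \<phi>" and gi: "integrable (lebesgue_on {0..1}) g"
  shows "lapD (\<lambda>x. - lam * g x + c) \<phi> = - lapD (\<lambda>x. lam * g x) \<phi>"
proof -
  have s: "smooth_fun \<phi>" using assms by (simp add: neumann_test_def)
  have cd: "continuous_on {0..1} (deriv (deriv \<phi>))" using sm_cont_on[OF sm_deriv[OF sm_deriv[OF s]]] .
  have i1: "(\<lambda>x. g x * deriv (deriv \<phi>) x) integrable_on {0..1}"
    using HK_eq(1)[OF int_mult_cont[OF gi cd]] .
  have i2: "deriv (deriv \<phi>) integrable_on {0..1}" by (rule integrable_continuous_real[OF cd])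
  have "lapD (\<lambda>x. - lam * g x + c) \<phi> = integral {0..1} (\<lambda>x. (- lam) * (g x * deriv (deriv \<phi>) x) + c * deriv (deriv \<phi>) x)"
    by (simp add: lapD_def algebra_simps)
  also have "\<dots> = (- lam) * integral {0..1} (\<lambda>x. g x * deriv (deriv \<phi>) x) + c * integral {0..1} (deriv (deriv \<phi>))"
    using integral_add[OF integrable_on_cmult_left[OF i1, of "-lam"] integrable_on_cmult_left[OF i2, of c]]
    by simp
  also have "\<dots> = - lapD (\<lambda>x. lam * g x) \<phi>"
    using neumann_int0[OF assms(1)] by (simp add: lapD_def algebra_simps)
  finally show ?thesis .
qed



lemma sq1: "(-1::real)^n * (-1)^n = 1"
  by (simp add: power_mult_distrib[symmetric])

lemma Gd_ext_intL: "Gd (ext h) \<Longrightarrow> integrable (lebesgue_on {0..1}) h"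
proof -
  assume "Gd (ext h)"
  then have "integrable (lebesgue_on {0..1}) (ext h)" by (rule Gd_intL)
  moreover have "integrable (lebesgue_on {0..1}) (ext h) \<longleftrightarrow> integrable (lebesgue_on {0..1}) h"
    by (rule Bochner_Integration.integrable_cong) (auto simp: ext_id)
  ultimately show ?thesis by simp
qed

lemma lapD_add:
  assumes "neumann_test \<phi>" and a: "integrable (lebesgue_on {0..1}) a" and b: "integrable (lebesgue_on {0..1}) b"
  shows "lapD (\<lambda>x. a x + b x) \<phi> = lapD a \<phi> + lapD b \<phi>"
proof -
  have s: "smooth_fun \<phi>" using assms by (simp add: neumann_test_def)
  have cd: "continuous_on {0..1} (deriv (deriv \<phi>))" using sm_cont_on[OF sm_deriv[OF sm_deriv[OF s]]] .
  have i1: "(\<lambda>x. a x * deriv (deriv \<phi>) x) integrable_on {0..1}" using HK_eq(1)[OF int_mult_cont[OF a cd]] .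
  have i2: "(\<lambda>x. b x * deriv (deriv \<phi>) x) integrable_on {0..1}" using HK_eq(1)[OF int_mult_cont[OF b cd]] .
  show ?thesis unfolding lapD_def using integral_add[OF i1 i2] by (simp add: algebra_simps)
qed

lemma ext_comp3: "ext (\<lambda>x. F (u x) * v x * w x) = (\<lambda>x. F (ext u x) * ext v x * ext w x)"
  by (simp add: fun_eq_iff ext_rr)

lemma ext_affine: "ext (\<lambda>x. a * g x + c) = (\<lambda>x. a * ext g x + c)"
  by (simp add: fun_eq_iff ext_rr)

lemma ext_diff: "ext (\<lambda>x. a x - b x) = (\<lambda>x. ext a x - ext b x)"
  by (simp add: fun_eq_iff ext_rr)

lemma ext_add: "ext (\<lambda>x. a x + b x) = (\<lambda>x. ext a x + ext b x)"
  by (simp add: fun_eq_iff ext_rr)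

lemma mean_zero_ext:
  assumes g: "Gd (ext g)" and s: "0 \<le> s" "s \<le> 2" and ap: "AP s (-1) (ext g)"
  shows "integral {0..1} g = 0"
  using AP_mean[OF g ext_periodic s ap] int_ext(2)[OF g] by simp

lemma h_props:
  fixes lam :: real
  assumes g: "Gd (ext g)"
  defines "h \<equiv> (\<lambda>x. - lam * g x + lam * integral {0..1} g)"
  shows "Gd (ext h)" "integral {0..1} h = 0" "ext h = (\<lambda>x. - lam * ext g x + lam * integral {0..1} g)"
proof -
  show e: "ext h = (\<lambda>x. - lam * ext g x + lam * integral {0..1} g)"
    unfolding h_def by (rule ext_affine)
  show "Gd (ext h)" unfolding e by (intro Gd_add Gd_cmult g Gd_const)
  have ig: "g integrable_on {0..1}" using int_ext(1)[OF g] .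
  have i1: "(\<lambda>x. - lam * g x) integrable_on {0..1}" using integrable_on_cmult_left[OF ig, of "-lam"] by simp
  have i2: "(\<lambda>x::real. lam * integral {0..1} g) integrable_on {0..1}" using Henstock_Kurzweil_Integration.integrable_const_ivl[where c="lam * integral {0..1} g" and a="0::real" and b=1] by simp
  have "integral {0..1} h = integral {0..1} (\<lambda>x. - lam * g x) + integral {0..1} (\<lambda>x::real. lam * integral {0..1} g)"
    unfolding h_def by (rule integral_add[OF i1 i2])
  also have "\<dots> = 0" by simp
  finally show "integral {0..1} h = 0" .
qed

lemma YL:
  fixes f u v w :: "real \<Rightarrow> real" and lam :: real
  defines "g \<equiv> (\<lambda>x. deriv (deriv f) (u x) * v x * w x)"
  assumes G: "Gd (ext g)"
    and k: "ker_cond n \<tau> (\<lambda>x. - lam * ext g x + lam * integral {0..1} g)"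
  shows "Ysub n \<tau> (DuuF f lam u v w)"
proof -
  define h where "h = (\<lambda>x. - lam * g x + lam * integral {0..1} g)"
  note hp = h_props[OF G, of lam, folded h_def]
  have gi: "integrable (lebesgue_on {0..1}) g" by (rule Gd_ext_intL[OF G])
  show ?thesis
  proof (rule Ysub_intro[OF hp(1) hp(2)])
    show "ker_cond n \<tau> (ext h)" using k hp(3) by simp
    fix \<phi> assume nt: "neumann_test \<phi>"
    have "DuuF f lam u v w \<phi> = - lapD (\<lambda>x. lam * g x) \<phi>"
      by (simp add: DuuF_def g_def mult.assoc)
    also have "\<dots> = lapD h \<phi>" unfolding h_def by (rule lapD_affine[OF nt gi, symmetric])
    finally show "DuuF f lam u v w \<phi> = lapD h \<phi>" .
  qed
qed

lemma per_int:
  fixes P :: "real \<Rightarrow> real"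
  assumes p: "\<And>y. P (y + 2) = P y"
  shows "P (y + 2 * of_int k) = P y"
proof -
  have pn: "P (y + 2 * real m) = P y" for y m
  proof (induction m arbitrary: y)
    case 0 then show ?case by simp
  next
    case (Suc m)
    have "P (y + 2 * real (Suc m)) = P ((y + 2 * real m) + 2)" by (simp add: algebra_simps)
    also have "\<dots> = P y" using p Suc by simp
    finally show ?case .
  qed
  show ?thesis
  proof (cases "k \<ge> 0")
    case True
    then obtain m where "k = int m" using nonneg_int_cases by blast
    then show ?thesis using pn by simp
  next
    case False
    define m where "m = nat (- k)"
    have m: "k = - int m" using False by (simp add: m_def)
    have "P y = P ((y - 2 * real m) + 2 * real m)" by simp
    also have "\<dots> = P (y - 2 * real m)" by (rule pn)
    finally show ?thesis using m by simp
  qed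
qed



lemma DL:
  fixes f u v w :: "real \<Rightarrow> real" and lam :: real
  defines "g \<equiv> (\<lambda>x. deriv (deriv f) (u x) * v x * w x)"
  assumes n: "n \<ge> 1" and G: "Gd (ext g)" and apg: "AP 1 ((-1)^n) (ext g)"
  shows "dsumY (Ysub n Sa) (Ysub n Sb) (DuuF f lam u v w)"
proof -
  define m where "m = integral {0..1} g"
  define h where "h = (\<lambda>x. - lam * g x + lam * m)"
  note hp = h_props[OF G, of lam, folded m_def, folded h_def]
  define H where "H = ext h"
  have GH: "Gd H" using hp(1) by (simp add: H_def)
  have Hf: "H = (\<lambda>x. - lam * ext g x + lam * m)" using hp(3) by (simp add: H_def)
  have apH: "AP 1 ((-1)^n) H"
  proof (cases "even n")
    case True
    then show ?thesis unfolding Hf using AP_affine[OF apg, where b="-lam" and c="lam * m"] by simp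
  next
    case False
    then have ap1: "AP 1 (-1) (ext g)" using apg by simp
    have "m = 0" unfolding m_def by (rule mean_zero_ext[OF G _ _ ap1]) auto
    then show ?thesis unfolding Hf using AP_affine[OF apg, where b="-lam" and c="lam * m"] by simp
  qed
  have Hper: "H (y + 2) = H y" for y by (simp add: H_def ext_periodic)
  have Heven: "H (- y) = H y" for y by (simp add: H_def ext_neg)
  define S where "S = (\<lambda>x. \<Sum>k<n. (-1)^k * H (x + real k / real n))"
  define P where "P = (\<lambda>x. (1 / real n) * S x)"
  have GS: "Gd S" unfolding S_def by (intro Gd_sum Gd_cmult Gd_shift GH) simp
  have GP: "Gd P" unfolding P_def by (intro Gd_cmult GS)
  have Sper: "S (y + 2) = S y" for y
    unfolding S_def by (intro sum.cong refl) (metis Hper add.commute add.left_commute)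
  have Pper: "P (y + 2) = P y" for y by (simp add: P_def Sper)
  have apS: "AP (1 / real n) (-1) S"
    unfolding AP_def using apH[unfolded AP_def]
  proof eventually_elim
    case (elim x)
    have "S (x + 1 / real n) = - S x + H x - (-1)^n * H (x + 1)"
      unfolding S_def using sum_shift_identity[OF n, of H x] by (simp add: add.assoc)
    also have "(-1)^n * H (x + 1) = H x" using elim sq1[of n] by (simp add: mult.assoc[symmetric])
    finally show ?case by simp
  qed
  have apP: "AP (1 / real n) (-1) P" unfolding P_def by (rule AP_cmult[OF apS])
  define c where "c = real (n - 1) / real n"
  have refl_id: "S (x - c) = (-1)^(n - 1) * S (- x)" for x
  proof -
    have "S (x - c) = (\<Sum>i<n. (-1)^(n - Suc i) * H (x - c + real (n - Suc i) / real n))"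
      unfolding S_def by (rule sum.nat_diff_reindex[symmetric])
    also have "\<dots> = (\<Sum>i<n. (-1)^(n - 1) * ((-1)^i * H (- x + real i / real n)))"
    proof (intro sum.cong refl)
      fix i assume i: "i \<in> {..<n}"
      have r: "real (n - Suc i) = real n - 1 - real i" using i by (simp add: of_nat_diff)
      have r1: "real (n - 1) = real n - 1" using n by (simp add: of_nat_diff)
      have eq: "x - c + real (n - Suc i) / real n = x - real i / real n"
        unfolding c_def r r1 using n by (simp add: field_simps)
      have e1: "H (x - c + real (n - Suc i) / real n) = H (- x + real i / real n)"
      proof -
        have "H (- x + real i / real n) = H (- (x - real i / real n))" by simp
        also have "\<dots> = H (x - real i / real n)" by (rule Heven)
        finally show ?thesis by (simp only: eq)
      qed
      have "(-1::real)^(n - 1) = (-1)^(n - Suc i) * (-1)^i"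
        using i by (simp add: power_add[symmetric])
      then have e2: "(-1::real)^(n - Suc i) = (-1)^(n - 1) * (-1)^i"
        using sq1[of i] by (metis mult.assoc mult.right_neutral)
      show "(-1)^(n - Suc i) * H (x - c + real (n - Suc i) / real n) = (-1)^(n - 1) * ((-1)^i * H (- x + real i / real n))"
        using e1 e2 by simp
    qed
    also have "\<dots> = (-1)^(n - 1) * S (- x)" unfolding S_def by (simp add: sum_distrib_left)
    finally show ?thesis .
  qed
  have evS: "AE x in lebesgue. S (- x) = S x"
  proof -
    have "AP (real (n - 1) * (1 / real n)) ((-1)^(n - 1)) S" by (rule AP_iter[OF apS])
    then have "AE y in lebesgue. S (y + c) = (-1)^(n - 1) * S y" by (simp add: AP_def c_def)
    then have "AE x in lebesgue. S (x + - c + c) = (-1)^(n - 1) * S (x + - c)" by (rule AE_shift)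
    then show ?thesis
    proof eventually_elim
      case (elim x)
      then have "S x = (-1)^(n - 1) * S (x - c)" by simp
      also have "\<dots> = ((-1)^(n - 1) * (-1)^(n - 1)) * S (- x)" using refl_id[of x] by simp
      finally show ?case using sq1[of "n - 1"] by simp
    qed
  qed
  have evP: "AE x in lebesgue. P (- x) = P x" using evS by eventually_elim (simp add: P_def)
  define ha where "ha = P"
  define hb where "hb = (\<lambda>x. h x - P x)"
  have ehaAE: "AE x in lebesgue. ext ha x = P x"
    using evP
  proof eventually_elim
    case (elim x)
    obtain k :: int where "rr x = x - 2 * of_int k \<or> rr x = 2 * of_int k - x" using ext_rr_cases by blast
    then show ?case
    proof
      assume "rr x = x - 2 * of_int k"
      then show ?thesis using per_int[of P, OF Pper, of x "- k"] by (simp add: ext_rr ha_def)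
    next
      assume "rr x = 2 * of_int k - x"
      then show ?thesis using per_int[of P, OF Pper, of "- x" k] elim by (simp add: ext_rr ha_def)
    qed
  qed
  have Gha: "Gd (ext ha)" by (rule Gd_AE[OF GP ehaAE])
  have kha: "ker_cond n Sa (ext ha)" unfolding ker_Sa by (rule AP_AE[OF apP ehaAE])
  have mha: "integral {0..1} ha = 0"
  proof -
    have "integral {0..2} (ext ha) = integral {0..2} P" by (rule int_AE[OF ehaAE])
    also have "\<dots> = 0" by (rule AP_mean[OF GP Pper _ _ apP]) (use n in \<open>auto simp: divide_le_eq\<close>)
    finally show ?thesis using int_ext(2)[OF Gha] by simp
  qed
  have ehb: "ext hb = (\<lambda>x. H x - ext ha x)" unfolding hb_def H_def ha_def by (rule ext_diff)
  have Ghb: "Gd (ext hb)" unfolding ehb by (intro Gd_diff GH Gha)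
  have mhb: "integral {0..1} hb = 0"
  proof -
    have "integral {0..1} hb = integral {0..1} h - integral {0..1} ha"
      unfolding hb_def ha_def
      by (rule integral_diff) (use int_ext(1)[OF hp(1)] int_ext(1)[OF Gha] ha_def in auto)
    then show ?thesis using hp(2) mha by simp
  qed
  have khb: "ker_cond n Sb (ext hb)" unfolding ker_Sb
  proof -
    have a1: "AE x in lebesgue. \<forall>k\<in>{..<n}. ext ha (x + real k / real n) = P (x + real k / real n)"
      by (subst AE_finite_all) (auto intro: AE_shift[OF ehaAE])
    have a2: "AE x in lebesgue. \<forall>k\<in>{..<n}. P (x + real k / real n) = (-1)^k * P x"
    proof (subst AE_finite_all)
      show "\<forall>k\<in>{..<n}. AE x in lebesgue. P (x + real k / real n) = (-1)^k * P x"
        using AP_iter[OF apP] by (simp add: AP_def)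
    qed simp
    show "AE x in lebesgue. (\<Sum>k<n. (-1)^k * ext hb (x + real k / real n)) = 0"
      using a1 a2
    proof eventually_elim
      case (elim x)
      have "(\<Sum>k<n. (-1)^k * ext hb (x + real k / real n)) =
            (\<Sum>k<n. (-1)^k * H (x + real k / real n) - P x)"
      proof (intro sum.cong refl)
        fix k assume k: "k \<in> {..<n}"
        have "(-1)^k * ext hb (x + real k / real n) = (-1)^k * H (x + real k / real n) - ((-1)^k * (-1)^k) * P x"
          using elim k by (simp add: ehb algebra_simps)
        then show "(-1)^k * ext hb (x + real k / real n) = (-1)^k * H (x + real k / real n) - P x"
          using sq1[of k] by simp
      qed
      also have "\<dots> = S x - real n * P x" by (simp add: S_def sum_subtractf)
      also have "\<dots> = 0" using n by (simp add: P_def)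
      finally show ?case .
    qed
  qed
  have gi: "integrable (lebesgue_on {0..1}) g" by (rule Gd_ext_intL[OF G])
  have fnc: "DuuF f lam u v w \<phi> = lapD ha \<phi> + lapD hb \<phi>" if nt: "neumann_test \<phi>" for \<phi>
  proof -
    have "DuuF f lam u v w \<phi> = - lapD (\<lambda>x. lam * g x) \<phi>"
      by (simp add: DuuF_def g_def mult.assoc)
    also have "\<dots> = lapD h \<phi>" unfolding h_def m_def by (rule lapD_affine[OF nt gi, symmetric])
    also have "h = (\<lambda>x. ha x + hb x)" by (simp add: hb_def ha_def)
    also have "lapD (\<lambda>x. ha x + hb x) \<phi> = lapD ha \<phi> + lapD hb \<phi>"
      by (rule lapD_add[OF nt Gd_ext_intL[OF Gha] Gd_ext_intL[OF Ghb]])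
    finally show ?thesis .
  qed
  have Ya: "Ysub n Sa (lapD ha)" by (rule Ysub_intro[OF Gha mha kha]) simp
  have Yb: "Ysub n Sb (lapD hb)" by (rule Ysub_intro[OF Ghb mhb khb]) simp
  show ?thesis unfolding dsumY_def using Ya Yb fnc by blast
qed



lemma Xsub_Gd: "Xsub n \<tau> v \<Longrightarrow> Gd (ext v)"
proof -
  assume x: "Xsub n \<tau> v"
  obtain M where "AE t in lebesgue_on {0..1}. \<bar>v t\<bar> \<le> M" using X_bounded x unfolding Xsub_def by blast
  then have "AE x in lebesgue. \<bar>ext v x\<bar> \<le> M" by (rule AE_ext_bound)
  then show ?thesis using Gd_H2per x unfolding Xsub_def by blast
qed

lemma Sa_AP: "Xsub n Sa v \<Longrightarrow> AP (1 / real n) (-1) (ext v)"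
  unfolding Xsub_def ker_Sa by blast

lemma Sb_AP1: "n \<ge> 1 \<Longrightarrow> Xsub n Sb v \<Longrightarrow> AP 1 ((-1)^n) (ext v)"
  unfolding Xsub_def using Sb_to_1 by blast

lemma Sc_AP1: "n \<ge> 1 \<Longrightarrow> Xsub n Sc v \<Longrightarrow> AP 1 (- ((-1)^n)) (ext v)"
  unfolding Xsub_def using ker_Sc by blast

lemma dsum_props:
  assumes n: "n \<ge> 1" and d: "dsumX (Xsub n Sa) (Xsub n Sb) v"
  shows "Gd (ext v) \<and> AP 1 ((-1)^n) (ext v)"
proof -
  obtain va vb where a: "Xsub n Sa va" and b: "Xsub n Sb vb"
    and e: "AE t in lebesgue_on {0..1}. v t = va t + vb t"
    using d unfolding dsumX_def by blast
  have e2: "AE x in lebesgue. ext v x = ext va x + ext vb x"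
    using AE_ext_eq[OF e] by (simp add: ext_add)
  have G: "Gd (ext v)" by (rule Gd_AE[OF Gd_add[OF Xsub_Gd[OF a] Xsub_Gd[OF b]] e2])
  have "AP 1 ((-1)^n) (ext va)" using Sa_to_1[OF n Sa_AP[OF a]] by simp
  then have "AP 1 ((-1)^n) (\<lambda>x. ext va x + ext vb x)" by (rule AP_add[OF _ Sb_AP1[OF n b]])
  then have "AP 1 ((-1)^n) (ext v)" by (rule AP_AE[OF _ e2])
  with G show ?thesis by blast
qed

lemma le2: "n \<ge> 1 \<Longrightarrow> 1 / real n \<le> 2"
  by (simp add: divide_le_eq)

theorem lemma2p14:
  fixes n :: nat and \<sigma> :: real and f :: "real \<Rightarrow> real"
  assumes "n \<ge> 1" and "\<sigma> > 0"
    and "smooth_fun f" and "\<forall>x. f (- x) = - f x"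
  shows "\<forall>lam u. Xsub n Sa u \<longrightarrow>
     (\<forall>v w. Xsub n Sa v \<longrightarrow> Xsub n Sa w \<longrightarrow> Ysub n Sa (DuuF f lam u v w)) \<and>
     (\<forall>v w. dsumX (Xsub n Sa) (Xsub n Sb) v \<longrightarrow> dsumX (Xsub n Sa) (Xsub n Sb) w \<longrightarrow>
        dsumY (Ysub n Sa) (Ysub n Sb) (DuuF f lam u v w)) \<and>
     (\<forall>v w. Xsub n Sa v \<longrightarrow> Xsub n Sb w \<longrightarrow> Ysub n Sb (DuuF f lam u v w)) \<and>
     (\<forall>v w. Xsub n Sc v \<longrightarrow> Xsub n Sc w \<longrightarrow> dsumY (Ysub n Sa) (Ysub n Sb) (DuuF f lam u v w)) \<and>
     (\<forall>v w. dsumX (Xsub n Sa) (Xsub n Sb) v \<longrightarrow> Xsub n Sc w \<longrightarrow> Ysub n Sc (DuuF f lam u v w))"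
proof (intro allI impI)
  fix lam u assume xu: "Xsub n Sa u"
  have n: "n \<ge> 1" by fact
  have sf: "smooth_fun f" by fact
  have odd_f: "\<forall>x. f (- x) = - f x" by fact
  define A where "A = (\<lambda>x. deriv (deriv f) (ext u x))"
  have GA: "Gd A" unfolding A_def by (rule Gd_comp[OF f2_cont[OF sf] Xsub_Gd[OF xu]])
  have apA: "AP (1 / real n) (-1) A" unfolding A_def
    by (rule AP_comp_odd[OF Sa_AP[OF xu]]) (rule f2_odd[OF sf odd_f])
  have apA1: "AP 1 ((-1)^n) A" using Sa_to_1[OF n apA] .
  have eg: "ext (\<lambda>x. deriv (deriv f) (u x) * v x * w x) = (\<lambda>x. A x * ext v x * ext w x)" for v w
    unfolding A_def by (rule ext_comp3)
  have Gg: "Gd (ext (\<lambda>x. deriv (deriv f) (u x) * v x * w x))" if "Gd (ext v)" "Gd (ext w)" for v w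
    unfolding eg by (intro Gd_mult GA that)
  have s1: "(0::real) \<le> 1" "(1::real) \<le> 2" by auto
  have sn: "0 \<le> 1 / real n" "1 / real n \<le> 2" using le2[OF n] by auto
  show "(\<forall>v w. Xsub n Sa v \<longrightarrow> Xsub n Sa w \<longrightarrow> Ysub n Sa (DuuF f lam u v w)) \<and>
     (\<forall>v w. dsumX (Xsub n Sa) (Xsub n Sb) v \<longrightarrow> dsumX (Xsub n Sa) (Xsub n Sb) w \<longrightarrow>
        dsumY (Ysub n Sa) (Ysub n Sb) (DuuF f lam u v w)) \<and>
     (\<forall>v w. Xsub n Sa v \<longrightarrow> Xsub n Sb w \<longrightarrow> Ysub n Sb (DuuF f lam u v w)) \<and>
     (\<forall>v w. Xsub n Sc v \<longrightarrow> Xsub n Sc w \<longrightarrow> dsumY (Ysub n Sa) (Ysub n Sb) (DuuF f lam u v w)) \<and>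
     (\<forall>v w. dsumX (Xsub n Sa) (Xsub n Sb) v \<longrightarrow> Xsub n Sc w \<longrightarrow> Ysub n Sc (DuuF f lam u v w))"
  proof (intro conjI allI impI)
    fix v w assume xv: "Xsub n Sa v" and xw: "Xsub n Sa w"
    define g where "g = (\<lambda>x. deriv (deriv f) (u x) * v x * w x)"
    have G: "Gd (ext g)" unfolding g_def by (rule Gg[OF Xsub_Gd[OF xv] Xsub_Gd[OF xw]])
    have ap: "AP (1 / real n) (-1) (ext g)"
      using AP_mult[OF AP_mult[OF apA Sa_AP[OF xv]] Sa_AP[OF xw]] unfolding g_def eg by simp
    have m0: "integral {0..1} g = 0" by (rule mean_zero_ext[OF G sn ap])
    show "Ysub n Sa (DuuF f lam u v w)"
    proof (rule YL)
      show "Gd (ext (\<lambda>x. deriv (deriv f) (u x) * v x * w x))" using G by (simp add: g_def)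
      show "ker_cond n Sa (\<lambda>x. - lam * ext (\<lambda>x. deriv (deriv f) (u x) * v x * w x) x +
          lam * integral {0..1} (\<lambda>x. deriv (deriv f) (u x) * v x * w x))"
        unfolding ker_Sa using AP_affine[OF ap, where b="-lam" and c=0] m0 by (simp add: g_def)
    qed
  next
    fix v w assume dv: "dsumX (Xsub n Sa) (Xsub n Sb) v" and dw: "dsumX (Xsub n Sa) (Xsub n Sb) w"
    note pv = dsum_props[OF n dv] and pw = dsum_props[OF n dw]
    show "dsumY (Ysub n Sa) (Ysub n Sb) (DuuF f lam u v w)"
    proof (rule DL[OF n])
      show "Gd (ext (\<lambda>x. deriv (deriv f) (u x) * v x * w x))" using Gg pv pw by blast
      have "AP 1 (((-1)^n * (-1)^n) * (-1)^n) (\<lambda>x. A x * ext v x * ext w x)"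
        using AP_mult[OF AP_mult[OF apA1 conjunct2[OF pv]] conjunct2[OF pw]] .
      then show "AP 1 ((-1)^n) (ext (\<lambda>x. deriv (deriv f) (u x) * v x * w x))"
        unfolding eg using sq1[of n] by simp
    qed
  next
    fix v w assume xv: "Xsub n Sa v" and xw: "Xsub n Sb w"
    define g where "g = (\<lambda>x. deriv (deriv f) (u x) * v x * w x)"
    define m where "m = integral {0..1} g"
    define B where "B = (\<lambda>x. A x * ext v x)"
    have G: "Gd (ext g)" unfolding g_def by (rule Gg[OF Xsub_Gd[OF xv] Xsub_Gd[OF xw]])
    have eg2: "ext g = (\<lambda>x. B x * ext w x)" unfolding g_def eg B_def by simp
    have apB: "AP (1 / real n) 1 B" unfolding B_def using AP_mult[OF apA Sa_AP[OF xv]] by simp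
    have mz: "m * (\<Sum>k<n. (-1::real)^k) = 0"
    proof (cases "even n")
      case True then show ?thesis by (simp add: sum_alt)
    next
      case False
      have "AP 1 (1 ^ n * (-1)^n) (ext g)" unfolding eg2
        by (rule AP_mult[OF Sa_to_1[OF n apB] Sb_AP1[OF n xw]])
      then have "AP 1 (-1) (ext g)" using False by simp
      then have "m = 0" unfolding m_def by (rule mean_zero_ext[OF G s1])
      then show ?thesis by simp
    qed
    show "Ysub n Sb (DuuF f lam u v w)"
    proof (rule YL)
      show "Gd (ext (\<lambda>x. deriv (deriv f) (u x) * v x * w x))" using G by (simp add: g_def)
      have a1: "AE x in lebesgue. \<forall>k\<in>{..<n}. B (x + real k / real n) = B x"
      proof (subst AE_finite_all)
        show "\<forall>k\<in>{..<n}. AE x in lebesgue. B (x + real k / real n) = B x"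
          using AP_iter[OF apB] by (simp add: AP_def)
      qed simp
      have a2: "AE x in lebesgue. (\<Sum>k<n. (-1)^k * ext w (x + real k / real n)) = 0"
        using xw unfolding Xsub_def ker_Sb by blast
      have "AE x in lebesgue. (\<Sum>k<n. (-1)^k * (- lam * ext g (x + real k / real n) + lam * m)) = 0"
        using a1 a2
      proof eventually_elim
        case (elim x)
        have "(\<Sum>k<n. (-1)^k * (- lam * ext g (x + real k / real n) + lam * m)) =
              (\<Sum>k<n. (- lam * B x) * ((-1)^k * ext w (x + real k / real n)) + lam * (m * (-1)^k))"
          by (intro sum.cong refl) (use elim in \<open>auto simp: eg2 algebra_simps\<close>)
        also have "\<dots> = (\<Sum>k<n. (- lam * B x) * ((-1)^k * ext w (x + real k / real n))) + (\<Sum>k<n. lam * (m * (-1)^k))"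
          by (rule sum.distrib)
        also have "\<dots> = (- lam * B x) * (\<Sum>k<n. (-1)^k * ext w (x + real k / real n)) + lam * (m * (\<Sum>k<n. (-1)^k))"
          by (simp only: sum_distrib_left)
        also have "\<dots> = 0" using elim mz by simp
        finally show ?case .
      qed
      then show "ker_cond n Sb (\<lambda>x. - lam * ext (\<lambda>x. deriv (deriv f) (u x) * v x * w x) x +
          lam * integral {0..1} (\<lambda>x. deriv (deriv f) (u x) * v x * w x))"
        unfolding ker_Sb by (simp add: g_def m_def)
    qed
  next
    fix v w assume xv: "Xsub n Sc v" and xw: "Xsub n Sc w"
    show "dsumY (Ysub n Sa) (Ysub n Sb) (DuuF f lam u v w)"
    proof (rule DL[OF n])
      show "Gd (ext (\<lambda>x. deriv (deriv f) (u x) * v x * w x))" using Gg Xsub_Gd xv xw by blast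
      have "AP 1 (((-1)^n * (- ((-1)^n))) * (- ((-1)^n))) (\<lambda>x. A x * ext v x * ext w x)"
        using AP_mult[OF AP_mult[OF apA1 Sc_AP1[OF n xv]] Sc_AP1[OF n xw]] .
      then show "AP 1 ((-1)^n) (ext (\<lambda>x. deriv (deriv f) (u x) * v x * w x))"
        unfolding eg using sq1[of n] by (simp add: mult.assoc)
    qed
  next
    fix v w assume dv: "dsumX (Xsub n Sa) (Xsub n Sb) v" and xw: "Xsub n Sc w"
    note pv = dsum_props[OF n dv]
    define g where "g = (\<lambda>x. deriv (deriv f) (u x) * v x * w x)"
    define m where "m = integral {0..1} g"
    have G: "Gd (ext g)" unfolding g_def using Gg Xsub_Gd xw pv by blast
    have "AP 1 (((-1)^n * (-1)^n) * (- ((-1)^n))) (\<lambda>x. A x * ext v x * ext w x)"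
      using AP_mult[OF AP_mult[OF apA1 conjunct2[OF pv]] Sc_AP1[OF n xw]] .
    then have ap: "AP 1 (- ((-1)^n)) (ext g)" unfolding g_def eg using sq1[of n] by simp
    have cz: "- ((-1::real)^n) = 1 \<or> lam * m = 0"
    proof (cases "even n")
      case False then show ?thesis by simp
    next
      case True
      then have "AP 1 (-1) (ext g)" using ap by simp
      then have "m = 0" unfolding m_def by (rule mean_zero_ext[OF G s1])
      then show ?thesis by simp
    qed
    show "Ysub n Sc (DuuF f lam u v w)"
    proof (rule YL)
      show "Gd (ext (\<lambda>x. deriv (deriv f) (u x) * v x * w x))" using G by (simp add: g_def)
      show "ker_cond n Sc (\<lambda>x. - lam * ext (\<lambda>x. deriv (deriv f) (u x) * v x * w x) x +
          lam * integral {0..1} (\<lambda>x. deriv (deriv f) (u x) * v x * w x))"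
        unfolding ker_Sc[OF n] using AP_affine[OF ap cz, where b="-lam"] by (simp add: g_def m_def)
    qed
  qed
qed


end
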